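(* Let $A$ be a real symmetric matrix normalized so that every row and every column has $0$ as its minimal entry, and let $$A^{+}=\begin{pmatrix}0&\mathbf 0\\ \mathbf 0&A\end{pmatrix}$$ be obtained by adjoining a zero row and a zero column. Then: (1) if $A$ has symmetric tropical rank two, so does $A^{+}$; (2) if $A$ has symmetric Kapranov rank two, so does $A^{+}$.
   Context: Let $\tilde K$ be the field of Hahn series $\sum_{\alpha\in A}c_\alpha t^\alpha$ ($A\subset\mathbb R$ well-ordered, $c_\alpha\in\mathbb C$); for nonzero $a\in\tilde K$, $\deg(a)$ is the smallest exponent with nonzero coefficient. A symmetric lift of a real symmetric matrix $A$ is a symmetric matrix $\tilde A$ over $\tilde K$ with all entries nonzero and $\deg(\tilde a_{i,j})=A_{i,j}$; the symmetric Kapranov rank of $A$ is the minimum rank of a symmetric lift. For an $r\times r$ submatrix of $A$ with row index set $I$ and column index set $J$, each bijection $\rho:I\to J$ gives a monomial $\prod_{i\in I}X_{i,\rho(i)}$ in commuting variables subject to $X_{i,j}=X_{j,i}$, with value $\sum_{i\in I}A_{i,\rho(i)}$; the submatrix is symmetrically tropically singular if the minimum value is attained by at least two distinct monomials. The symmetric tropical rank of $A$ is the largest $r$ such that $A$ has an $r\times r$ submatrix that is not symmetrically tropically singular. *)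

theory Defs
  imports Complex_Main "HOL-Library.Multiset"
begin

text \<open>A Hahn series sum c_alpha t^alpha is represented by its coefficient
function real => complex; it is a Hahn series iff its support is well-ordered.\<close>

type_synonym hahn = "real \<Rightarrow> complex"

definition hsupp :: "hahn \<Rightarrow> real set" where
  "hsupp a = {\<alpha>. a \<alpha> \<noteq> 0}"

definition is_hahn :: "hahn \<Rightarrow> bool" where
  "is_hahn a \<longleftrightarrow> (\<forall>S. S \<subseteq> hsupp a \<longrightarrow> S \<noteq> {} \<longrightarrow> (\<exists>m\<in>S. \<forall>x\<in>S. m \<le> x))"

text \<open>Field operations: addition is pointwise, multiplication is the
Cauchy product (the index set is finite for Hahn series).\<close>

definition hmul :: "hahn \<Rightarrow> hahn \<Rightarrow> hahn" where
  "hmul a b = (\<lambda>\<gamma>. \<Sum>p\<in>{(\<alpha>, \<beta>). a \<alpha> \<noteq> 0 \<and> b \<beta> \<noteq> 0 \<and> \<alpha> + \<beta> = \<gamma>}.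
                     a (fst p) * b (snd p))"

definition hdeg :: "hahn \<Rightarrow> real" where
  "hdeg a = (LEAST \<alpha>. a \<alpha> \<noteq> 0)"

definition hrank_le :: "nat \<Rightarrow> (nat \<Rightarrow> nat \<Rightarrow> hahn) \<Rightarrow> nat \<Rightarrow> bool" where
  "hrank_le n L r \<longleftrightarrow> (\<exists>B C.
      (\<forall>i<n. \<forall>k<r. is_hahn (B i k)) \<and> (\<forall>k<r. \<forall>j<n. is_hahn (C k j)) \<and>
      (\<forall>i<n. \<forall>j<n. L i j = (\<lambda>\<gamma>. \<Sum>k<r. hmul (B i k) (C k j) \<gamma>)))"

definition hrank :: "nat \<Rightarrow> (nat \<Rightarrow> nat \<Rightarrow> hahn) \<Rightarrow> nat" where
  "hrank n L = (LEAST r. hrank_le n L r)"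

definition symmetric_mat :: "nat \<Rightarrow> (nat \<Rightarrow> nat \<Rightarrow> 'a) \<Rightarrow> bool" where
  "symmetric_mat n A \<longleftrightarrow> (\<forall>i<n. \<forall>j<n. A i j = A j i)"

definition sym_lift :: "nat \<Rightarrow> (nat \<Rightarrow> nat \<Rightarrow> real) \<Rightarrow> (nat \<Rightarrow> nat \<Rightarrow> hahn) \<Rightarrow> bool" where
  "sym_lift n A L \<longleftrightarrow> symmetric_mat n L \<and>
     (\<forall>i<n. \<forall>j<n. is_hahn (L i j) \<and> L i j \<noteq> (\<lambda>_. 0) \<and> hdeg (L i j) = A i j)"

definition sym_kapranov_rank :: "nat \<Rightarrow> (nat \<Rightarrow> nat \<Rightarrow> real) \<Rightarrow> nat" where
  "sym_kapranov_rank n A = (LEAST r. \<exists>L. sym_lift n A L \<and> hrank n L = r)"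

text \<open>Monomial of a bijection rho : I -> J: multiset of unordered pairs {i, rho i}
(commuting variables with X_ij = X_ji).\<close>

definition sym_monomial :: "nat set \<Rightarrow> (nat \<Rightarrow> nat) \<Rightarrow> nat set multiset" where
  "sym_monomial I \<rho> = image_mset (\<lambda>i. {i, \<rho> i}) (mset_set I)"

definition mono_value :: "(nat \<Rightarrow> nat \<Rightarrow> real) \<Rightarrow> nat set \<Rightarrow> (nat \<Rightarrow> nat) \<Rightarrow> real" where
  "mono_value A I \<rho> = (\<Sum>i\<in>I. A i (\<rho> i))"

definition sym_trop_singular :: "(nat \<Rightarrow> nat \<Rightarrow> real) \<Rightarrow> nat set \<Rightarrow> nat set \<Rightarrow> bool" where
  "sym_trop_singular A I J \<longleftrightarrow> (\<exists>\<rho>1 \<rho>2.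
      bij_betw \<rho>1 I J \<and> bij_betw \<rho>2 I J \<and>
      (\<forall>\<rho>. bij_betw \<rho> I J \<longrightarrow> mono_value A I \<rho>1 \<le> mono_value A I \<rho>) \<and>
      mono_value A I \<rho>2 = mono_value A I \<rho>1 \<and>
      sym_monomial I \<rho>1 \<noteq> sym_monomial I \<rho>2)"

definition sym_tropical_rank :: "nat \<Rightarrow> (nat \<Rightarrow> nat \<Rightarrow> real) \<Rightarrow> nat" where
  "sym_tropical_rank n A = (GREATEST r. \<exists>I J. I \<subseteq> {..<n} \<and> J \<subseteq> {..<n} \<and>
      card I = r \<and> card J = r \<and> \<not> sym_trop_singular A I J)"

definition normalized :: "nat \<Rightarrow> (nat \<Rightarrow> nat \<Rightarrow> real) \<Rightarrow> bool" where
  "normalized n A \<longleftrightarrow>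
     (\<forall>i<n. (\<forall>j<n. 0 \<le> A i j) \<and> (\<exists>j<n. A i j = 0)) \<and>
     (\<forall>j<n. (\<forall>i<n. 0 \<le> A i j) \<and> (\<exists>i<n. A i j = 0))"

definition aug :: "(nat \<Rightarrow> nat \<Rightarrow> real) \<Rightarrow> nat \<Rightarrow> nat \<Rightarrow> real" where
  "aug A i j = (if i = 0 \<or> j = 0 then 0 else A (i - 1) (j - 1))"

end

theory Submission
  imports Defs "HOL-Library.FuncSet"
begin


lemma wo_max_min_finite:
  fixes S :: "real set"
  assumes mn: "\<And>T. T \<subseteq> S \<Longrightarrow> T \<noteq> {} \<Longrightarrow> \<exists>m\<in>T. \<forall>x\<in>T. m \<le> x"
    and mx: "\<And>T. T \<subseteq> S \<Longrightarrow> T \<noteq> {} \<Longrightarrow> \<exists>m\<in>T. \<forall>x\<in>T. x \<le> m"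
  shows "finite S"
proof (rule ccontr)
  assume "infinite S"
  then obtain s :: "nat \<Rightarrow> real" where s: "inj s" "range s \<subseteq> S"
    using infinite_iff_countable_subset[of S] by blast
  obtain f where f: "strict_mono f" "monoseq (\<lambda>n. s (f n))" using seq_monosub[of s] by blast
  define t where "t = (\<lambda>n. s (f n))"
  have "inj (s \<circ> f)" by (rule inj_compose[OF s(1) strict_mono_imp_inj_on[OF f(1)]])
  then have tinj: "inj t" unfolding t_def by (simp add: comp_def)
  have tS: "range t \<subseteq> S" using s(2) unfolding t_def by auto
  from f(2) have "(\<forall>m n. m \<le> n \<longrightarrow> t m \<le> t n) \<or> (\<forall>m n. m \<le> n \<longrightarrow> t n \<le> t m)"
    unfolding monoseq_def t_def by simp
  then show False
  proof
    assume inc: "\<forall>m n. m \<le> n \<longrightarrow> t m \<le> t n"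
    obtain k where "\<forall>x\<in>range t. x \<le> t k" using mx[OF tS] by blast
    hence "t (Suc k) \<le> t k" by blast
    moreover have "t k \<le> t (Suc k)" using inc by simp
    ultimately have "t (Suc k) = t k" by simp
    with tinj show False by (simp add: inj_eq)
  next
    assume dec: "\<forall>m n. m \<le> n \<longrightarrow> t n \<le> t m"
    obtain k where "\<forall>x\<in>range t. t k \<le> x" using mn[OF tS] by blast
    hence "t k \<le> t (Suc k)" by blast
    moreover have "t (Suc k) \<le> t k" using dec by simp
    ultimately have "t (Suc k) = t k" by simp
    with tinj show False by (simp add: inj_eq)
  qed
qed
definition hpairs :: "hahn \<Rightarrow> hahn \<Rightarrow> real \<Rightarrow> (real \<times> real) set" where
  "hpairs a b g = {(\<alpha>, \<beta>). a \<alpha> \<noteq> 0 \<and> b \<beta> \<noteq> 0 \<and> \<alpha> + \<beta> = g}"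

lemma hmul_hpairs: "hmul a b g = (\<Sum>p\<in>hpairs a b g. a (fst p) * b (snd p))"
  unfolding hmul_def hpairs_def by simp

lemma finite_hpairs:
  assumes "is_hahn a" "is_hahn b"
  shows "finite (hpairs a b g)"
proof -
  define S where "S = {\<alpha>. a \<alpha> \<noteq> 0 \<and> b (g - \<alpha>) \<noteq> 0}"
  have "finite S"
  proof (rule wo_max_min_finite)
    fix T assume "T \<subseteq> S" "T \<noteq> {}"
    then show "\<exists>m\<in>T. \<forall>x\<in>T. m \<le> x"
      using assms(1) unfolding is_hahn_def hsupp_def S_def by blast
  next
    fix T assume T: "T \<subseteq> S" "T \<noteq> {}"
    have "(\<lambda>x. g - x) ` T \<subseteq> hsupp b" using T unfolding S_def hsupp_def by auto
    moreover have "(\<lambda>x. g - x) ` T \<noteq> {}" using T by auto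
    ultimately obtain m where "m \<in> (\<lambda>x. g - x) ` T" "\<forall>x\<in>(\<lambda>x. g - x) ` T. m \<le> x"
      using assms(2) unfolding is_hahn_def by blast
    then show "\<exists>m\<in>T. \<forall>x\<in>T. x \<le> m" by force
  qed
  moreover have "hpairs a b g \<subseteq> (\<lambda>x. (x, g - x)) ` S"
    unfolding hpairs_def S_def by force
  ultimately show ?thesis by (meson finite_imageI finite_subset)
qed

lemma hmul_superset:
  assumes "finite P" "hpairs a b g \<subseteq> P" "\<And>p. p \<in> P \<Longrightarrow> fst p + snd p = g"
  shows "hmul a b g = (\<Sum>p\<in>P. a (fst p) * b (snd p))"
  unfolding hmul_hpairs
  by (rule sum.mono_neutral_left[OF assms(1,2)]) (use assms(3) in \<open>force simp: hpairs_def\<close>)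

lemma hmul_sum_left:
  assumes "finite K" "\<And>m. m \<in> K \<Longrightarrow> is_hahn (a m)" "is_hahn b"
  shows "hmul (\<lambda>x. \<Sum>m\<in>K. c m * a m x) b g = (\<Sum>m\<in>K. c m * hmul (a m) b g)"
proof -
  define P where "P = (\<Union>m\<in>K. hpairs (a m) b g)"
  have fP: "finite P" unfolding P_def using assms finite_hpairs by blast
  have gP: "\<And>p. p \<in> P \<Longrightarrow> fst p + snd p = g" unfolding P_def hpairs_def by auto
  have sub: "hpairs (\<lambda>x. \<Sum>m\<in>K. c m * a m x) b g \<subseteq> P"
  proof
    fix p assume "p \<in> hpairs (\<lambda>x. \<Sum>m\<in>K. c m * a m x) b g"
    then obtain x y where p: "p = (x,y)" "(\<Sum>m\<in>K. c m * a m x) \<noteq> 0" "b y \<noteq> 0" "x + y = g"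
      unfolding hpairs_def by auto
    then obtain m where "m \<in> K" "a m x \<noteq> 0" by (metis (mono_tags, lifting) mult_zero_right sum.neutral)
    then show "p \<in> P" using p unfolding P_def hpairs_def by auto
  qed
  have "hmul (\<lambda>x. \<Sum>m\<in>K. c m * a m x) b g = (\<Sum>p\<in>P. (\<Sum>m\<in>K. c m * a m (fst p)) * b (snd p))"
    by (rule hmul_superset[OF fP sub gP])
  also have "\<dots> = (\<Sum>m\<in>K. c m * (\<Sum>p\<in>P. a m (fst p) * b (snd p)))"
    by (simp add: sum_distrib_left sum_distrib_right mult.assoc) (rule sum.swap)
  also have "\<dots> = (\<Sum>m\<in>K. c m * hmul (a m) b g)"
  proof (rule sum.cong[OF refl])
    fix m assume "m \<in> K"
    have "hpairs (a m) b g \<subseteq> P" using \<open>m \<in> K\<close> unfolding P_def by auto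
    then show "c m * (\<Sum>p\<in>P. a m (fst p) * b (snd p)) = c m * hmul (a m) b g"
      using hmul_superset[OF fP _ gP] by simp
  qed
  finally show ?thesis .
qed

lemma hmul_sum_right:
  assumes "finite K" "\<And>m. m \<in> K \<Longrightarrow> is_hahn (b m)" "is_hahn a"
  shows "hmul a (\<lambda>x. \<Sum>m\<in>K. c m * b m x) g = (\<Sum>m\<in>K. c m * hmul a (b m) g)"
proof -
  define P where "P = (\<Union>m\<in>K. hpairs a (b m) g)"
  have fP: "finite P" unfolding P_def using assms finite_hpairs by blast
  have gP: "\<And>p. p \<in> P \<Longrightarrow> fst p + snd p = g" unfolding P_def hpairs_def by auto
  have sub: "hpairs a (\<lambda>x. \<Sum>m\<in>K. c m * b m x) g \<subseteq> P"
  proof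
    fix p assume "p \<in> hpairs a (\<lambda>x. \<Sum>m\<in>K. c m * b m x) g"
    then obtain x y where p: "p = (x,y)" "(\<Sum>m\<in>K. c m * b m y) \<noteq> 0" "a x \<noteq> 0" "x + y = g"
      unfolding hpairs_def by auto
    then obtain m where "m \<in> K" "b m y \<noteq> 0" by (metis (mono_tags, lifting) mult_zero_right sum.neutral)
    then show "p \<in> P" using p unfolding P_def hpairs_def by auto
  qed
  have "hmul a (\<lambda>x. \<Sum>m\<in>K. c m * b m x) g = (\<Sum>p\<in>P. a (fst p) * (\<Sum>m\<in>K. c m * b m (snd p)))"
    by (rule hmul_superset[OF fP sub gP])
  also have "\<dots> = (\<Sum>m\<in>K. c m * (\<Sum>p\<in>P. a (fst p) * b m (snd p)))"
    by (simp add: sum_distrib_left sum_distrib_right mult.left_commute) (rule sum.swap)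
  also have "\<dots> = (\<Sum>m\<in>K. c m * hmul a (b m) g)"
  proof (rule sum.cong[OF refl])
    fix m assume "m \<in> K"
    have "hpairs a (b m) g \<subseteq> P" using \<open>m \<in> K\<close> unfolding P_def by auto
    then show "c m * (\<Sum>p\<in>P. a (fst p) * b m (snd p)) = c m * hmul a (b m) g"
      using hmul_superset[OF fP _ gP] by simp
  qed
  finally show ?thesis .
qed

lemma is_hahn_subset: "is_hahn b \<Longrightarrow> hsupp a \<subseteq> hsupp b \<Longrightarrow> is_hahn a"
  unfolding is_hahn_def by (meson order_trans)

lemma is_hahn_finite_supp: "finite (hsupp a) \<Longrightarrow> is_hahn a"
  unfolding is_hahn_def
proof (intro allI impI)
  fix S assume "finite (hsupp a)" "S \<subseteq> hsupp a" "S \<noteq> {}"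
  then have fS: "finite S" using finite_subset by blast
  have "Min S \<in> S" using fS \<open>S \<noteq> {}\<close> by (rule Min_in)
  moreover have "\<forall>x\<in>S. Min S \<le> x" using fS by simp
  ultimately show "\<exists>m\<in>S. \<forall>x\<in>S. m \<le> x" by blast
qed

lemma is_hahn_union: "is_hahn a \<Longrightarrow> is_hahn b \<Longrightarrow> hsupp c \<subseteq> hsupp a \<union> hsupp b \<Longrightarrow> is_hahn c"
  unfolding is_hahn_def
proof (intro allI impI)
  fix S assume a: "\<forall>S. S \<subseteq> hsupp a \<longrightarrow> S \<noteq> {} \<longrightarrow> (\<exists>m\<in>S. \<forall>x\<in>S. m \<le> x)"
    and b: "\<forall>S. S \<subseteq> hsupp b \<longrightarrow> S \<noteq> {} \<longrightarrow> (\<exists>m\<in>S. \<forall>x\<in>S. m \<le> x)"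
    and c: "hsupp c \<subseteq> hsupp a \<union> hsupp b" and S: "S \<subseteq> hsupp c" "S \<noteq> {}"
  show "\<exists>m\<in>S. \<forall>x\<in>S. m \<le> x"
  proof (cases "S \<inter> hsupp a = {}")
    case True
    then have "S \<subseteq> hsupp b" using S c by auto
    then show ?thesis using b S by blast
  next
    case Fa: False
    obtain ma where ma: "ma \<in> S \<inter> hsupp a" "\<forall>x\<in>S \<inter> hsupp a. ma \<le> x" using a Fa by (meson inf_le2)
    show ?thesis
    proof (cases "S \<inter> hsupp b = {}")
      case True
      then have "S \<subseteq> hsupp a" using S c by auto
      then show ?thesis using a S by blast
    next
      case False
      obtain mb where mb: "mb \<in> S \<inter> hsupp b" "\<forall>x\<in>S \<inter> hsupp b. mb \<le> x" using b False by (meson inf_le2)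
      have "\<forall>x\<in>S. min ma mb \<le> x"
      proof
        fix x assume "x \<in> S"
        then have "x \<in> hsupp a \<or> x \<in> hsupp b" using S c by auto
        then show "min ma mb \<le> x" using ma mb \<open>x \<in> S\<close> by (auto simp: min_le_iff_disj)
      qed
      moreover have "min ma mb \<in> S" using ma mb by (simp add: min_def)
      ultimately show ?thesis by blast
    qed
  qed
qed

lemma is_hahn_lincomb:
  assumes "finite K" "\<And>m. m \<in> K \<Longrightarrow> is_hahn (a m)"
  shows "is_hahn (\<lambda>x. \<Sum>m\<in>K. c m * a m x)"
  using assms
proof (induction K rule: finite_induct)
  case empty
  then show ?case by (simp add: is_hahn_finite_supp hsupp_def)
next
  case (insert k K)
  have h1: "is_hahn (a k)" using insert by auto
  have h2: "is_hahn (\<lambda>x. \<Sum>m\<in>K. c m * a m x)" using insert by auto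
  show ?case
    by (rule is_hahn_union[OF h1 h2]) (auto simp: hsupp_def insert)
qed


lemma hdeg_props:
  assumes "is_hahn a" "a \<noteq> (\<lambda>_. 0)"
  shows "a (hdeg a) \<noteq> 0" "\<And>x. a x \<noteq> 0 \<Longrightarrow> hdeg a \<le> x"
proof -
  obtain x0 where "a x0 \<noteq> 0" using assms(2) by auto
  then have "hsupp a \<noteq> {}" unfolding hsupp_def by auto
  then obtain m where m: "m \<in> hsupp a" "\<forall>x\<in>hsupp a. m \<le> x"
    using assms(1) unfolding is_hahn_def by blast
  have "hdeg a = m" unfolding hdeg_def
    by (rule Least_equality) (use m in \<open>auto simp: hsupp_def\<close>)
  then show "a (hdeg a) \<noteq> 0" "\<And>x. a x \<noteq> 0 \<Longrightarrow> hdeg a \<le> x"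
    using m by (auto simp: hsupp_def)
qed

lemma hdeg_eq:
  assumes "a x0 \<noteq> 0" "\<And>x. a x \<noteq> 0 \<Longrightarrow> x0 \<le> x"
  shows "hdeg a = x0"
  unfolding hdeg_def by (rule Least_equality) (use assms in auto)

definition hdelta :: hahn where "hdelta = (\<lambda>x. if x = 0 then 1 else 0)"

lemma hmul_delta: "hmul hdelta b = b"
proof
  fix g
  have "hpairs hdelta b g = (if b g \<noteq> 0 then {(0, g)} else {})"
    unfolding hpairs_def hdelta_def by (auto split: if_splits)
  then show "hmul hdelta b g = b g" unfolding hmul_hpairs by (simp add: hdelta_def)
qed

lemma hmul_zero: "hmul (\<lambda>_. 0) b = (\<lambda>_. 0)"
  unfolding hmul_def by simp

lemma is_hahn_zero: "is_hahn (\<lambda>_. 0)"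
  by (rule is_hahn_finite_supp) (simp add: hsupp_def)

lemma is_hahn_delta: "is_hahn hdelta"
  by (rule is_hahn_finite_supp) (simp add: hsupp_def hdelta_def)

lemma hrank_le_self:
  assumes "\<forall>i<n. \<forall>j<n. is_hahn (L i j)"
  shows "hrank_le n L n"
  unfolding hrank_le_def
proof (intro exI conjI)
  let ?B = "\<lambda>i k. if i = k then hdelta else (\<lambda>_. 0)"
  show "\<forall>i<n. \<forall>k<n. is_hahn (?B i k)" by (simp add: is_hahn_zero is_hahn_delta)
  show "\<forall>k<n. \<forall>j<n. is_hahn (L k j)" using assms by blast
  show "\<forall>i<n. \<forall>j<n. L i j = (\<lambda>g. \<Sum>k<n. hmul (?B i k) (L k j) g)"
  proof (intro allI impI ext)
    fix i j g assume "i < n" "j < n"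
    have "(\<Sum>k<n. hmul (?B i k) (L k j) g) = (\<Sum>k<n. if k = i then L i j g else 0)"
      by (rule sum.cong) (auto simp: hmul_delta hmul_zero)
    also have "\<dots> = L i j g" using \<open>i < n\<close> by simp
    finally show "L i j g = (\<Sum>k<n. hmul (?B i k) (L k j) g)" by simp
  qed
qed

lemma hrank_le_hrank:
  assumes "\<forall>i<n. \<forall>j<n. is_hahn (L i j)"
  shows "hrank_le n L (hrank n L)"
  unfolding hrank_def by (rule LeastI[of "hrank_le n L", OF hrank_le_self[OF assms]])

lemma hrank_le_restrict:
  assumes "hrank_le (Suc n) L r"
  shows "hrank_le n (\<lambda>i j. L (Suc i) (Suc j)) r"
proof -
  obtain B C where BC: "\<forall>i<Suc n. \<forall>k<r. is_hahn (B i k)" "\<forall>k<r. \<forall>j<Suc n. is_hahn (C k j)"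
    "\<forall>i<Suc n. \<forall>j<Suc n. L i j = (\<lambda>g. \<Sum>k<r. hmul (B i k) (C k j) g)"
    using assms unfolding hrank_le_def by blast
  show ?thesis unfolding hrank_le_def
    by (rule exI[of _ "\<lambda>i k. B (Suc i) k"], rule exI[of _ "\<lambda>k j. C k (Suc j)"]) (use BC in auto)
qed

lemma lift_restrict:
  assumes "sym_lift (Suc n) (aug A) L"
  shows "sym_lift n A (\<lambda>i j. L (Suc i) (Suc j))"
  using assms unfolding sym_lift_def symmetric_mat_def by (auto simp: aug_def)

lemma mono_lift:
  assumes "symmetric_mat n A"
  shows "sym_lift n A (\<lambda>i j x. if x = A i j then 1 else 0)"
  unfolding sym_lift_def
proof (intro conjI allI impI)
  show "symmetric_mat n (\<lambda>i j x. if x = A i j then 1 else (0::complex))"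
    using assms unfolding symmetric_mat_def by auto
  fix i j assume "i < n" "j < n"
  show "is_hahn (\<lambda>x. if x = A i j then 1 else 0)"
    by (rule is_hahn_finite_supp) (simp add: hsupp_def)
  show "(\<lambda>x. if x = A i j then 1 else 0) \<noteq> (\<lambda>_. 0::complex)"
    by (metis one_neq_zero)
  show "hdeg (\<lambda>x. if x = A i j then 1 else 0) = A i j"
    by (rule hdeg_eq) (auto split: if_splits)
qed


lemma sum_two:
  assumes "finite K" "a \<in> K" "b \<in> K" "a \<noteq> b" "\<And>m. m \<in> K \<Longrightarrow> m \<noteq> a \<Longrightarrow> m \<noteq> b \<Longrightarrow> f m = 0"
  shows "sum f K = f a + (f b :: complex)"
proof -
  have "sum f K = sum f {a, b}"
    by (rule sum.mono_neutral_right) (use assms in auto)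
  then show ?thesis using assms(4) by simp
qed

lemma sum_one:
  assumes "finite K" "a \<in> K" "\<And>m. m \<in> K \<Longrightarrow> m \<noteq> a \<Longrightarrow> f m = 0"
  shows "sum f K = (f a :: complex)"
proof -
  have "sum f K = sum f {a}"
    by (rule sum.mono_neutral_right) (use assms in auto)
  then show ?thesis by simp
qed

lemma avoid_finite:
  assumes "finite (S :: complex set)"
  obtains x where "x \<notin> S"
  using assms ex_new_if_finite infinite_UNIV_char_0 by blast

lemma choose_lambda:
  fixes c :: "nat \<Rightarrow> nat \<Rightarrow> complex"
  assumes col: "\<forall>j<n. \<exists>m<n. c m j \<noteq> 0" and sym: "\<forall>i<n. \<forall>j<n. c i j = c j i" and n: "0 < n"
  shows "\<exists>l. (\<forall>j<n. (\<Sum>m<n. l m * c m j) \<noteq> 0) \<and> (\<Sum>m<n. l m * (\<Sum>m'<n. l m' * c m m')) \<noteq> 0"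
proof -
  define Q where "Q = (\<lambda>w. \<Sum>m<n. w m * (\<Sum>m'<n. w m' * c m m'))"
  have "\<exists>w. Q w \<noteq> 0"
  proof (cases "\<exists>m<n. c m m \<noteq> 0")
    case True
    then obtain a where a: "a < n" "c a a \<noteq> 0" by blast
    define w where "w = (\<lambda>k. if k = a then 1 else (0::complex))"
    have "Q w = w a * (\<Sum>m'<n. w m' * c a m')"
      unfolding Q_def by (rule sum_one) (use a in \<open>auto simp: w_def\<close>)
    also have "(\<Sum>m'<n. w m' * c a m') = w a * c a a"
      by (rule sum_one) (use a in \<open>auto simp: w_def\<close>)
    finally have "Q w = c a a" by (simp add: w_def)
    then show ?thesis using a by (intro exI[of _ w]) simp
  next
    case False
    obtain a where a: "a < n" "c a 0 \<noteq> 0" using col n by blast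
    have a0: "a \<noteq> 0"
    proof
      assume "a = 0" then show False using False a by auto
    qed
    define w where "w = (\<lambda>k. if k = a \<or> k = 0 then 1 else (0::complex))"
    have inner: "\<And>m. m < n \<Longrightarrow> (\<Sum>m'<n. w m' * c m m') = w a * c m a + w 0 * c m 0"
      by (rule sum_two) (use a a0 n in \<open>auto simp: w_def\<close>)
    have "Q w = w a * (\<Sum>m'<n. w m' * c a m') + w 0 * (\<Sum>m'<n. w m' * c 0 m')"
      unfolding Q_def by (rule sum_two) (use a a0 n in \<open>auto simp: w_def\<close>)
    also have "\<dots> = c a a + c a 0 + c 0 a + c 0 0"
      using inner[of a] inner[of 0] a n by (simp add: w_def)
    also have "\<dots> = 2 * c a 0"
      using False a n sym by auto
    finally have "Q w \<noteq> 0" using a by simp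
    then show ?thesis by blast
  qed
  then obtain w where w: "Q w \<noteq> 0" by blast
  define N where "N = n - 1"
  have lessN: "{..<n} = {..N}" using n unfolding N_def by auto
  define Bad1 where "Bad1 = (\<Union>j<n. {z. (\<Sum>i\<le>N. c i j * z ^ i) = 0})"
  have "finite Bad1" unfolding Bad1_def
  proof (rule finite_UN_I)
    show "finite {..<n}" by simp
    fix j assume "j \<in> {..<n}"
    then obtain m where "m < n" "c m j \<noteq> 0" using col by auto
    then show "finite {z. (\<Sum>i\<le>N. c i j * z ^ i) = 0}"
      by (intro polyfun_roots_finite[of "\<lambda>i. c i j" m]) (auto simp: N_def)
  qed
  then obtain y where y: "y \<notin> Bad1" using avoid_finite by blast
  define g where "g = (\<lambda>m. y ^ m)"
  have gj: "\<And>j. j < n \<Longrightarrow> (\<Sum>m<n. g m * c m j) \<noteq> 0"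
  proof -
    fix j assume "j < n"
    have "(\<Sum>m<n. g m * c m j) = (\<Sum>i\<le>N. c i j * y ^ i)"
      unfolding lessN g_def by (simp add: mult.commute)
    then show "(\<Sum>m<n. g m * c m j) \<noteq> 0" using y \<open>j < n\<close> unfolding Bad1_def by auto
  qed
  define R where "R = (\<Sum>m<n. w m * (\<Sum>m'<n. g m' * c m m') + g m * (\<Sum>m'<n. w m' * c m m'))"
  define e where "e = (\<lambda>i::nat. if i = 0 then Q w else if i = 1 then R else Q g)"
  have quad: "\<And>x. Q (\<lambda>m. w m + x * g m) = (\<Sum>i\<le>2. e i * x ^ i)"
  proof -
    fix x
    have "Q (\<lambda>m. w m + x * g m) = Q w + x * R + x^2 * Q g"
      unfolding Q_def R_def
      by (simp add: algebra_simps sum.distrib sum_distrib_left power2_eq_square)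
    also have "\<dots> = (\<Sum>i\<le>2. e i * x ^ i)"
      by (simp add: e_def numeral_2_eq_2 algebra_simps)
    finally show "Q (\<lambda>m. w m + x * g m) = (\<Sum>i\<le>2. e i * x ^ i)" .
  qed
  define lin where "lin = (\<lambda>j (i::nat). if i = 0 then (\<Sum>m<n. w m * c m j) else (\<Sum>m<n. g m * c m j))"
  have linid: "\<And>x j. (\<Sum>m<n. (w m + x * g m) * c m j) = (\<Sum>i\<le>1. lin j i * x ^ i)"
    by (simp add: lin_def algebra_simps sum.distrib sum_distrib_left)
  define Bad2 where "Bad2 = {x. (\<Sum>i\<le>2. e i * x ^ i) = 0} \<union> (\<Union>j<n. {x. (\<Sum>i\<le>1. lin j i * x ^ i) = 0})"
  have "finite Bad2" unfolding Bad2_def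
  proof (intro finite_UnI finite_UN_I)
    show "finite {x. (\<Sum>i\<le>2. e i * x ^ i) = 0}"
      by (rule polyfun_roots_finite[of e 0]) (use w in \<open>auto simp: e_def\<close>)
    show "finite {..<n}" by simp
    fix j assume "j \<in> {..<n}"
    then show "finite {x. (\<Sum>i\<le>1. lin j i * x ^ i) = 0}"
      by (intro polyfun_roots_finite[of "lin j" 1]) (use gj in \<open>auto simp: lin_def\<close>)
  qed
  then obtain x where x: "x \<notin> Bad2" using avoid_finite by blast
  define l where "l = (\<lambda>m. w m + x * g m)"
  have "\<forall>j<n. (\<Sum>m<n. l m * c m j) \<noteq> 0"
    using x unfolding Bad2_def l_def linid by auto
  moreover have "(\<Sum>m<n. l m * (\<Sum>m'<n. l m' * c m m')) \<noteq> 0"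
    using x quad[of x] unfolding Bad2_def l_def Q_def by auto
  ultimately show ?thesis by blast
qed


lemma supp_nonneg_lincomb:
  fixes a :: "'k \<Rightarrow> hahn" and c :: "'k \<Rightarrow> complex"
  assumes "\<And>m x. m \<in> K \<Longrightarrow> a m x \<noteq> 0 \<Longrightarrow> 0 \<le> x"
    and "(\<Sum>m\<in>K. c m * a m x) \<noteq> 0"
  shows "0 \<le> (x::real)"
proof -
  have "\<exists>m\<in>K. a m x \<noteq> 0"
  proof (rule ccontr)
    assume "\<not> (\<exists>m\<in>K. a m x \<noteq> 0)"
    then have "\<forall>m\<in>K. c m * a m x = 0" by simp
    then have "(\<Sum>m\<in>K. c m * a m x) = 0" by (rule sum.neutral)
    then show False using assms(2) by contradiction
  qed
  then obtain m where "m \<in> K" "a m x \<noteq> 0" by blast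
  then show ?thesis using assms(1) by blast
qed

lemma deg0:
  assumes "\<And>x. f x \<noteq> 0 \<Longrightarrow> 0 \<le> x" "f 0 \<noteq> 0"
  shows "f \<noteq> (\<lambda>_. 0)" "hdeg f = 0"
proof -
  show "f \<noteq> (\<lambda>_. 0)"
  proof
    assume "f = (\<lambda>_. 0)" then show False using assms(2) by simp
  qed
  show "hdeg f = 0" by (rule hdeg_eq[of f 0, OF assms(2)]) (rule assms(1))
qed

lemma extend_lift:
  fixes B C :: "nat \<Rightarrow> nat \<Rightarrow> hahn" and L :: "nat \<Rightarrow> nat \<Rightarrow> hahn"
  assumes symA: "symmetric_mat n A" and nA: "normalized n A" and lift: "sym_lift n A L" and n: "0 < n"
    and hB: "\<forall>i<n. \<forall>k<2. is_hahn (B i k)" and hC: "\<forall>k<2. \<forall>j<n. is_hahn (C k j)"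
    and LBC: "\<forall>i<n. \<forall>j<n. L i j = (\<lambda>g. \<Sum>k<2. hmul (B i k) (C k j) g)"
  shows "\<exists>L'. sym_lift (Suc n) (aug A) L' \<and> hrank_le (Suc n) L' 2"
proof -
  have hL: "\<And>i j. i < n \<Longrightarrow> j < n \<Longrightarrow> is_hahn (L i j)" using lift unfolding sym_lift_def by blast
  have nzL: "\<And>i j. i < n \<Longrightarrow> j < n \<Longrightarrow> L i j \<noteq> (\<lambda>_. 0)" using lift unfolding sym_lift_def by blast
  have dL: "\<And>i j. i < n \<Longrightarrow> j < n \<Longrightarrow> hdeg (L i j) = A i j" using lift unfolding sym_lift_def by blast
  have sL: "\<And>i j. i < n \<Longrightarrow> j < n \<Longrightarrow> L i j = L j i" using lift unfolding sym_lift_def symmetric_mat_def by blast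
  have Anonneg: "\<And>i j. i < n \<Longrightarrow> j < n \<Longrightarrow> 0 \<le> A i j" using nA unfolding normalized_def by blast
  have suppL: "\<And>i j x. i < n \<Longrightarrow> j < n \<Longrightarrow> L i j x \<noteq> 0 \<Longrightarrow> 0 \<le> x"
  proof -
    fix i j x assume "i < n" "j < n" "L i j x \<noteq> 0"
    then have "hdeg (L i j) \<le> x" using hdeg_props(2)[OF hL nzL] by blast
    then show "0 \<le> x" using Anonneg dL \<open>i < n\<close> \<open>j < n\<close> by fastforce
  qed
  have zeroL: "\<And>i j. i < n \<Longrightarrow> j < n \<Longrightarrow> A i j = 0 \<Longrightarrow> L i j 0 \<noteq> 0"
    using hdeg_props(1)[OF hL nzL] dL by metis
  define c where "c = (\<lambda>i j. L i j 0)"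
  have ccol: "\<forall>j<n. \<exists>m<n. c m j \<noteq> 0"
  proof (intro allI impI)
    fix j assume "j < n"
    then obtain i where "i < n" "A i j = 0" using nA unfolding normalized_def by blast
    then show "\<exists>m<n. c m j \<noteq> 0" using zeroL \<open>j < n\<close> unfolding c_def by blast
  qed
  have csym: "\<forall>i<n. \<forall>j<n. c i j = c j i" unfolding c_def using sL by simp
  obtain l where l1: "\<forall>j<n. (\<Sum>m<n. l m * c m j) \<noteq> 0"
    and l2: "(\<Sum>m<n. l m * (\<Sum>m'<n. l m' * c m m')) \<noteq> 0"
    using choose_lambda[OF ccol csym n] by blast
  define p where "p = (\<lambda>k x. \<Sum>m<n. l m * B m k x)"
  define q where "q = (\<lambda>k x. \<Sum>m<n. l m * C k m x)"
  define B' where "B' = (\<lambda>i k. if i = 0 then p k else B (i - 1) k)"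
  define C' where "C' = (\<lambda>k j. if j = 0 then q k else C k (j - 1))"
  define L' where "L' = (\<lambda>i j g. \<Sum>k<2. hmul (B' i k) (C' k j) g)"
  have hp: "\<And>k. k < 2 \<Longrightarrow> is_hahn (p k)" unfolding p_def
    by (rule is_hahn_lincomb) (use hB in auto)
  have hq: "\<And>k. k < 2 \<Longrightarrow> is_hahn (q k)" unfolding q_def
    by (rule is_hahn_lincomb) (use hC in auto)
  have f1: "\<forall>i<Suc n. \<forall>k<2. is_hahn (B' i k)" using hB hp unfolding B'_def by auto
  have f2: "\<forall>k<2. \<forall>j<Suc n. is_hahn (C' k j)" using hC hq unfolding C'_def by auto
  have f3: "\<forall>i<Suc n. \<forall>j<Suc n. L' i j = (\<lambda>g. \<Sum>k<2. hmul (B' i k) (C' k j) g)"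
    unfolding L'_def by simp
  have hrk: "hrank_le (Suc n) L' 2" unfolding hrank_le_def using f1 f2 f3 by blast
  have E1: "\<And>i j. i < n \<Longrightarrow> j < n \<Longrightarrow> L' (Suc i) (Suc j) = L i j"
    using LBC unfolding L'_def B'_def C'_def by simp
  have E2: "\<And>j. j < n \<Longrightarrow> L' 0 (Suc j) = (\<lambda>g. \<Sum>m<n. l m * L m j g)"
  proof (rule ext)
    fix j g assume j: "j < n"
    have "L' 0 (Suc j) g = (\<Sum>k<2. hmul (p k) (C k j) g)" unfolding L'_def B'_def C'_def by simp
    also have "\<dots> = (\<Sum>k<2. \<Sum>m<n. l m * hmul (B m k) (C k j) g)"
      unfolding p_def by (rule sum.cong[OF refl], rule hmul_sum_left) (use hB hC j in auto)
    also have "\<dots> = (\<Sum>m<n. \<Sum>k<2. l m * hmul (B m k) (C k j) g)"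
      by (rule sum.swap)
    also have "\<dots> = (\<Sum>m<n. l m * (\<Sum>k<2. hmul (B m k) (C k j) g))"
      by (simp only: sum_distrib_left)
    also have "\<dots> = (\<Sum>m<n. l m * L m j g)"
      using LBC j by simp
    finally show "L' 0 (Suc j) g = (\<Sum>m<n. l m * L m j g)" .
  qed
  have E3: "\<And>i. i < n \<Longrightarrow> L' (Suc i) 0 = (\<lambda>g. \<Sum>m<n. l m * L i m g)"
  proof (rule ext)
    fix i g assume i: "i < n"
    have "L' (Suc i) 0 g = (\<Sum>k<2. hmul (B i k) (q k) g)" unfolding L'_def B'_def C'_def by simp
    also have "\<dots> = (\<Sum>k<2. \<Sum>m<n. l m * hmul (B i k) (C k m) g)"
      unfolding q_def by (rule sum.cong[OF refl], rule hmul_sum_right) (use hB hC i in auto)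
    also have "\<dots> = (\<Sum>m<n. \<Sum>k<2. l m * hmul (B i k) (C k m) g)"
      by (rule sum.swap)
    also have "\<dots> = (\<Sum>m<n. l m * (\<Sum>k<2. hmul (B i k) (C k m) g))"
      by (simp only: sum_distrib_left)
    also have "\<dots> = (\<Sum>m<n. l m * L i m g)"
      using LBC i by simp
    finally show "L' (Suc i) 0 g = (\<Sum>m<n. l m * L i m g)" .
  qed
  have E4: "L' 0 0 = (\<lambda>g. \<Sum>m<n. l m * (\<Sum>m'<n. l m' * L m m' g))"
  proof (rule ext)
    fix g
    have "L' 0 0 g = (\<Sum>k<2. hmul (p k) (q k) g)" unfolding L'_def B'_def C'_def by simp
    also have "\<dots> = (\<Sum>k<2. \<Sum>m<n. l m * hmul (B m k) (q k) g)"
      unfolding p_def by (rule sum.cong[OF refl], rule hmul_sum_left) (use hB hq in auto)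
    also have "\<dots> = (\<Sum>k<2. \<Sum>m<n. l m * (\<Sum>m'<n. l m' * hmul (B m k) (C k m') g))"
      unfolding q_def by (intro sum.cong[OF refl] arg_cong2[where f="(*)"] refl hmul_sum_right) (use hB hC in auto)
    also have "\<dots> = (\<Sum>k<2. \<Sum>m<n. \<Sum>m'<n. l m * (l m' * hmul (B m k) (C k m') g))"
      by (simp only: sum_distrib_left)
    also have "\<dots> = (\<Sum>m<n. \<Sum>k<2. \<Sum>m'<n. l m * (l m' * hmul (B m k) (C k m') g))"
      by (rule sum.swap)
    also have "\<dots> = (\<Sum>m<n. \<Sum>m'<n. \<Sum>k<2. l m * (l m' * hmul (B m k) (C k m') g))"
      by (rule sum.cong[OF refl], rule sum.swap)
    also have "\<dots> = (\<Sum>m<n. l m * (\<Sum>m'<n. l m' * (\<Sum>k<2. hmul (B m k) (C k m') g)))"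
      by (simp only: sum_distrib_left)
    also have "\<dots> = (\<Sum>m<n. l m * (\<Sum>m'<n. l m' * L m m' g))"
      using LBC by simp
    finally show "L' 0 0 g = (\<Sum>m<n. l m * (\<Sum>m'<n. l m' * L m m' g))" .
  qed
  have "sym_lift (Suc n) (aug A) L'"
    unfolding sym_lift_def
  proof (rule conjI)
    show "symmetric_mat (Suc n) L'"
      unfolding symmetric_mat_def
    proof (intro allI impI)
      fix i j assume "i < Suc n" "j < Suc n"
      then show "L' i j = L' j i"
        using E1 E2 E3 sL by (cases i; cases j) auto
    qed
  next
    show "\<forall>i<Suc n. \<forall>j<Suc n. is_hahn (L' i j) \<and> L' i j \<noteq> (\<lambda>_. 0) \<and> hdeg (L' i j) = aug A i j"
    proof (intro allI impI)
    fix i j assume ij: "i < Suc n" "j < Suc n"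
    show "is_hahn (L' i j) \<and> L' i j \<noteq> (\<lambda>_. 0) \<and> hdeg (L' i j) = aug A i j"
    proof (cases i)
      case 0
      note i0 = 0
      show ?thesis
      proof (cases j)
        case 0
        have h1: "\<And>m. m < n \<Longrightarrow> is_hahn (\<lambda>g. \<Sum>m'<n. l m' * L m m' g)"
          by (rule is_hahn_lincomb) (use hL in auto)
        have h: "is_hahn (L' 0 0)" unfolding E4 by (rule is_hahn_lincomb) (use h1 in auto)
        have s1: "\<And>m x. m < n \<Longrightarrow> (\<Sum>m'<n. l m' * L m m' x) \<noteq> 0 \<Longrightarrow> 0 \<le> x"
          by (rule supp_nonneg_lincomb[of "{..<n}"]) (use suppL in auto)
        have s: "\<And>x. L' 0 0 x \<noteq> 0 \<Longrightarrow> 0 \<le> x" unfolding E4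
          by (rule supp_nonneg_lincomb[of "{..<n}"]) (use s1 in auto)
        have z: "L' 0 0 0 \<noteq> 0" unfolding E4 using l2 unfolding c_def by simp
        show ?thesis using h deg0[of "L' 0 0", OF s z] i0 0 by (simp add: aug_def)
      next
        case (Suc j')
        have jn: "j' < n" using ij Suc by simp
        have h: "is_hahn (L' 0 (Suc j'))" unfolding E2[OF jn] by (rule is_hahn_lincomb) (use hL jn in auto)
        have s: "\<And>x. L' 0 (Suc j') x \<noteq> 0 \<Longrightarrow> 0 \<le> x" unfolding E2[OF jn]
          by (rule supp_nonneg_lincomb[of "{..<n}"]) (use suppL jn in auto)
        have z: "L' 0 (Suc j') 0 \<noteq> 0" unfolding E2[OF jn] using l1 jn unfolding c_def by simp
        show ?thesis using h deg0[of "L' 0 (Suc j')", OF s z] i0 Suc by (simp add: aug_def)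
      qed
    next
      case (Suc i')
      have iN: "i' < n" using ij Suc by simp
      show ?thesis
      proof (cases j)
        case 0
        have h: "is_hahn (L' (Suc i') 0)" unfolding E3[OF iN] by (rule is_hahn_lincomb) (use hL iN in auto)
        have s: "\<And>x. L' (Suc i') 0 x \<noteq> 0 \<Longrightarrow> 0 \<le> x" unfolding E3[OF iN]
          by (rule supp_nonneg_lincomb[of "{..<n}"]) (use suppL iN in auto)
        have "(\<Sum>m<n. l m * L i' m 0) = (\<Sum>m<n. l m * c m i')"
          unfolding c_def by (rule sum.cong) (use sL iN in auto)
        then have z: "L' (Suc i') 0 0 \<noteq> 0" unfolding E3[OF iN] using l1 iN by simp
        show ?thesis using h deg0[of "L' (Suc i') 0", OF s z] Suc 0 by (simp add: aug_def)
      next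
        case (Suc j')
        have jn: "j' < n" using ij Suc by simp
        show ?thesis using E1[OF iN jn] hL[OF iN jn] nzL[OF iN jn] dL[OF iN jn] \<open>i = Suc i'\<close> Suc
          by (simp add: aug_def)
      qed
    qed
    qed
  qed
  with hrk show ?thesis by blast
qed


lemma lift_hahn: "sym_lift n A L \<Longrightarrow> \<forall>i<n. \<forall>j<n. is_hahn (L i j)"
  unfolding sym_lift_def by blast

lemma kapranov_part:
  assumes symA: "symmetric_mat n A" and nA: "normalized n A" and K: "sym_kapranov_rank n A = 2"
  shows "sym_kapranov_rank (n + 1) (aug A) = 2"
proof -
  define P where "P = (\<lambda>r. \<exists>L. sym_lift n A L \<and> hrank n L = r)"
  have KP: "(LEAST r. P r) = 2" using K unfolding sym_kapranov_rank_def P_def by simp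
  have K1: "\<And>L. sym_lift n A L \<Longrightarrow> 2 \<le> hrank n L"
  proof -
    fix L assume "sym_lift n A L"
    then have "P (hrank n L)" unfolding P_def by blast
    then have "(LEAST r. P r) \<le> hrank n L" by (rule Least_le)
    then show "2 \<le> hrank n L" using KP by simp
  qed
  have exP: "\<exists>r. P r" unfolding P_def using mono_lift[OF symA] by blast
  have "P (LEAST r. P r)" using exP by (rule LeastI_ex)
  then have "P 2" by (simp only: KP)
  then obtain L where L: "sym_lift n A L" "hrank n L = 2" unfolding P_def by blast
  have n: "0 < n"
  proof (rule ccontr)
    assume "\<not> 0 < n"
    then have n0: "n = 0" by simp
    have "hrank_le n L 0" unfolding hrank_le_def n0 by simp
    then have "hrank n L \<le> 0" unfolding hrank_def by (rule Least_le)
    then show False using L(2) by simp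
  qed
  have "hrank_le n L 2" using hrank_le_hrank[OF lift_hahn[OF L(1)]] L(2) by simp
  then obtain B C :: "nat \<Rightarrow> nat \<Rightarrow> hahn" where BC: "\<forall>i<n. \<forall>k<2. is_hahn (B i k)" "\<forall>k<2. \<forall>j<n. is_hahn (C k j)"
    "\<forall>i<n. \<forall>j<n. L i j = (\<lambda>g. \<Sum>k<2. hmul (B i k) (C k j) g)"
    unfolding hrank_le_def by blast
  obtain L' where L': "sym_lift (Suc n) (aug A) L'" "hrank_le (Suc n) L' 2"
    using extend_lift[OF symA nA L(1) n BC] by blast
  have low: "\<And>M r. sym_lift (Suc n) (aug A) M \<Longrightarrow> hrank_le (Suc n) M r \<Longrightarrow> 2 \<le> r"
  proof -
    fix M r assume M: "sym_lift (Suc n) (aug A) M" "hrank_le (Suc n) M r"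
    have R: "sym_lift n A (\<lambda>i j. M (Suc i) (Suc j))" by (rule lift_restrict[OF M(1)])
    have "hrank_le n (\<lambda>i j. M (Suc i) (Suc j)) r" by (rule hrank_le_restrict[OF M(2)])
    then have "hrank n (\<lambda>i j. M (Suc i) (Suc j)) \<le> r" unfolding hrank_def by (rule Least_le)
    moreover have "2 \<le> hrank n (\<lambda>i j. M (Suc i) (Suc j))" by (rule K1[OF R])
    ultimately show "2 \<le> r" by simp
  qed
  have hL': "hrank (Suc n) L' = 2" unfolding hrank_def
    by (rule Least_equality) (use L'(2) low[OF L'(1)] in auto)
  show ?thesis unfolding sym_kapranov_rank_def
  proof (rule Least_equality)
    show "\<exists>L. sym_lift (n + 1) (aug A) L \<and> hrank (n + 1) L = 2" using L' hL' by auto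
  next
    fix r assume "\<exists>L. sym_lift (n + 1) (aug A) L \<and> hrank (n + 1) L = r"
    then obtain M where M: "sym_lift (Suc n) (aug A) M" "hrank (Suc n) M = r" by auto
    have "hrank_le (Suc n) M r" using hrank_le_hrank[OF lift_hahn[OF M(1)]] M(2) by simp
    then show "2 \<le> r" using low[OF M(1)] by blast
  qed
qed


lemma nonsing_intro:
  assumes "bij_betw \<sigma> I J"
    and "\<And>\<rho>. bij_betw \<rho> I J \<Longrightarrow> sym_monomial I \<rho> \<noteq> sym_monomial I \<sigma> \<Longrightarrow> mono_value M I \<sigma> < mono_value M I \<rho>"
  shows "\<not> sym_trop_singular M I J"
proof
  assume "sym_trop_singular M I J"
  then obtain r1 r2 where r: "bij_betw r1 I J" "bij_betw r2 I J"
    "\<forall>\<rho>. bij_betw \<rho> I J \<longrightarrow> mono_value M I r1 \<le> mono_value M I \<rho>"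
    "mono_value M I r2 = mono_value M I r1" "sym_monomial I r1 \<noteq> sym_monomial I r2"
    unfolding sym_trop_singular_def by blast
  have le: "mono_value M I r1 \<le> mono_value M I \<sigma>" using r(3) assms(1) by blast
  have m1: "sym_monomial I r1 = sym_monomial I \<sigma>"
  proof (rule ccontr)
    assume "sym_monomial I r1 \<noteq> sym_monomial I \<sigma>"
    then have "mono_value M I \<sigma> < mono_value M I r1" using assms(2)[OF r(1)] by blast
    then show False using le by simp
  qed
  have m2: "sym_monomial I r2 = sym_monomial I \<sigma>"
  proof (rule ccontr)
    assume "sym_monomial I r2 \<noteq> sym_monomial I \<sigma>"
    then have "mono_value M I \<sigma> < mono_value M I r2" using assms(2)[OF r(2)] by blast
    then show False using le r(4) by simp
  qed
  show False using m1 m2 r(5) by simp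
qed

lemma nonsing_elim:
  assumes "\<not> sym_trop_singular M I J" "bij_betw \<sigma> I J"
    "\<And>\<rho>. bij_betw \<rho> I J \<Longrightarrow> mono_value M I \<sigma> \<le> mono_value M I \<rho>"
    "bij_betw \<rho> I J" "mono_value M I \<rho> \<le> mono_value M I \<sigma>"
  shows "sym_monomial I \<rho> = sym_monomial I \<sigma>"
proof (rule ccontr)
  assume "sym_monomial I \<rho> \<noteq> sym_monomial I \<sigma>"
  moreover have "mono_value M I \<rho> = mono_value M I \<sigma>" using assms(3)[OF assms(4)] assms(5) by simp
  ultimately have "sym_trop_singular M I J"
    unfolding sym_trop_singular_def using assms(2-4) by metis
  then show False using assms(1) by simp
qed

lemma exists_opt:
  assumes "finite I" "bij_betw \<rho>0 I J"
  shows "\<exists>\<sigma>. bij_betw \<sigma> I J \<and> (\<forall>\<rho>. bij_betw \<rho> I J \<longrightarrow> mono_value M I \<sigma> \<le> mono_value M I \<rho>)"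
proof -
  have fJ: "finite J" using assms bij_betw_finite by blast
  define F where "F = {\<rho> \<in> I \<rightarrow>\<^sub>E J. bij_betw \<rho> I J}"
  have fF: "finite F" unfolding F_def using finite_PiE[OF assms(1), of "\<lambda>_. J"] fJ by auto
  have r0: "restrict \<rho>0 I \<in> F" unfolding F_def using assms(2)
    by (auto simp: bij_betw_def inj_on_def)
  have restr_val: "\<And>\<rho>. mono_value M I (restrict \<rho> I) = mono_value M I \<rho>"
    unfolding mono_value_def by (rule sum.cong) auto
  have restr_bij: "\<And>\<rho>. bij_betw \<rho> I J \<Longrightarrow> restrict \<rho> I \<in> F"
    unfolding F_def by (auto simp: bij_betw_def inj_on_def)
  define V where "V = (\<lambda>\<rho>. mono_value M I \<rho>) ` F"
  have fV: "finite V" "V \<noteq> {}" unfolding V_def using fF r0 by auto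
  obtain \<sigma> where s: "\<sigma> \<in> F" "mono_value M I \<sigma> = Min V"
    using Min_in[OF fV] unfolding V_def by auto
  show ?thesis
  proof (intro exI conjI allI impI)
    show "bij_betw \<sigma> I J" using s(1) unfolding F_def by simp
    fix \<rho> assume "bij_betw \<rho> I J"
    then have "mono_value M I (restrict \<rho> I) \<in> V" unfolding V_def using restr_bij by blast
    then have "Min V \<le> mono_value M I (restrict \<rho> I)" using fV(1) by simp
    then show "mono_value M I \<sigma> \<le> mono_value M I \<rho>" using s(2) restr_val by simp
  qed
qed

lemma val3:
  assumes "a \<noteq> b" "a \<noteq> c" "b \<noteq> c"
  shows "mono_value M {a,b,c} \<rho> = M a (\<rho> a) + M b (\<rho> b) + M c (\<rho> c)"
  unfolding mono_value_def using assms by simp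

lemma mono3:
  assumes "a \<noteq> b" "a \<noteq> c" "b \<noteq> c"
  shows "sym_monomial {a,b,c} \<rho> = {#{a, \<rho> a}, {b, \<rho> b}, {c, \<rho> c}#}"
  unfolding sym_monomial_def using assms by simp

lemma bij3_cases:
  assumes "a \<noteq> b" "a \<noteq> c" "b \<noteq> c" "x \<noteq> y" "x \<noteq> z" "y \<noteq> z"
    and "bij_betw \<rho> {a,b,c} {x,y,z}"
  shows "(\<rho> a = x \<and> \<rho> b = y \<and> \<rho> c = z) \<or> (\<rho> a = x \<and> \<rho> b = z \<and> \<rho> c = y) \<or>
         (\<rho> a = y \<and> \<rho> b = x \<and> \<rho> c = z) \<or> (\<rho> a = y \<and> \<rho> b = z \<and> \<rho> c = x) \<or>
         (\<rho> a = z \<and> \<rho> b = x \<and> \<rho> c = y) \<or> (\<rho> a = z \<and> \<rho> b = y \<and> \<rho> c = x)"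
proof -
  have im: "\<rho> a \<in> {x,y,z}" "\<rho> b \<in> {x,y,z}" "\<rho> c \<in> {x,y,z}"
    using bij_betw_apply[OF assms(7)] by simp_all
  have ij: "inj_on \<rho> {a,b,c}" using assms(7) by (rule bij_betw_imp_inj_on)
  have inj: "\<rho> a \<noteq> \<rho> b" "\<rho> a \<noteq> \<rho> c" "\<rho> b \<noteq> \<rho> c"
    using inj_onD[OF ij, of a b] inj_onD[OF ij, of a c] inj_onD[OF ij, of b c] assms(1-3) by auto
  have "\<rho> a = x \<or> \<rho> a = y \<or> \<rho> a = z" "\<rho> b = x \<or> \<rho> b = y \<or> \<rho> b = z" 
    "\<rho> c = x \<or> \<rho> c = y \<or> \<rho> c = z" using im by simp_all
  then show ?thesis using inj by (elim disjE) simp_all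
qed

lemma bij3_mk:
  assumes "a \<noteq> b" "a \<noteq> c" "b \<noteq> c" "p \<noteq> q" "p \<noteq> s" "q \<noteq> s" "{p,q,s} = J"
  shows "bij_betw (\<lambda>t. if t = a then p else if t = b then q else s) {a,b,c} J"
proof -
  let ?f = "\<lambda>t. if t = a then p else if t = b then q else s"
  have fv: "?f a = p" "?f b = q" "?f c = s" using assms by auto
  have "?f ` {a,b,c} = {p,q,s}" by (simp only: image_insert image_empty fv)
  moreover have "inj_on ?f {a,b,c}"
  proof (rule inj_onI)
    fix u w assume "u \<in> {a,b,c}" "w \<in> {a,b,c}" "?f u = ?f w"
    then show "u = w" using assms(1-6) fv by (elim insertE emptyE) simp_all
  qed
  ultimately show ?thesis unfolding bij_betw_def using assms(7) by simp
qed

lemma mset_neqI: "x \<in># M1 \<Longrightarrow> x \<notin># M2 \<Longrightarrow> M1 \<noteq> M2"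
  by auto

lemma mset_neqI2: "x \<notin># M1 \<Longrightarrow> x \<in># M2 \<Longrightarrow> M1 \<noteq> M2"
  by auto


lemma inv_val:
  assumes "finite I" "bij_betw \<rho> I J" "\<forall>i\<in>I. \<forall>j\<in>J. M i j = M j i"
  shows "mono_value M J (inv_into I \<rho>) = mono_value M I \<rho>"
proof -
  have "mono_value M J (inv_into I \<rho>) = (\<Sum>i\<in>I. M (\<rho> i) (inv_into I \<rho> (\<rho> i)))"
    unfolding mono_value_def by (rule sum.reindex_bij_betw[symmetric, OF assms(2)])
  also have "\<dots> = (\<Sum>i\<in>I. M i (\<rho> i))"
  proof (rule sum.cong[OF refl])
    fix i assume i: "i \<in> I"
    have "inv_into I \<rho> (\<rho> i) = i" using i assms(2) by (simp add: bij_betw_def)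
    moreover have "\<rho> i \<in> J" using i assms(2) by (rule bij_betw_apply[rotated])
    ultimately show "M (\<rho> i) (inv_into I \<rho> (\<rho> i)) = M i (\<rho> i)" using assms(3) i by metis
  qed
  finally show ?thesis unfolding mono_value_def .
qed

lemma inv_mono:
  assumes "finite I" "bij_betw \<rho> I J"
  shows "sym_monomial J (inv_into I \<rho>) = sym_monomial I \<rho>"
proof -
  have inj: "inj_on \<rho> I" using assms(2) by (rule bij_betw_imp_inj_on)
  have "mset_set J = image_mset \<rho> (mset_set I)"
    using image_mset_mset_set[OF inj] assms(2) by (simp add: bij_betw_def)
  then have "sym_monomial J (inv_into I \<rho>) = image_mset (\<lambda>i. {\<rho> i, inv_into I \<rho> (\<rho> i)}) (mset_set I)"
    unfolding sym_monomial_def by (simp add: image_mset.compositionality comp_def)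
  also have "\<dots> = image_mset (\<lambda>i. {i, \<rho> i}) (mset_set I)"
  proof (rule image_mset_cong)
    fix i assume "i \<in># mset_set I"
    then have "i \<in> I" using assms(1) by simp
    then have "inv_into I \<rho> (\<rho> i) = i" using inj by simp
    then show "{\<rho> i, inv_into I \<rho> (\<rho> i)} = {i, \<rho> i}" by auto
  qed
  finally show ?thesis unfolding sym_monomial_def .
qed

lemma sing_transpose:
  assumes fI: "finite I" and sym: "\<forall>i\<in>I. \<forall>j\<in>J. M i j = M j i" and S: "sym_trop_singular M I J"
  shows "sym_trop_singular M J I"
proof -
  obtain r1 r2 where r: "bij_betw r1 I J" "bij_betw r2 I J"
    "\<forall>\<rho>. bij_betw \<rho> I J \<longrightarrow> mono_value M I r1 \<le> mono_value M I \<rho>"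
    "mono_value M I r2 = mono_value M I r1" "sym_monomial I r1 \<noteq> sym_monomial I r2"
    using S unfolding sym_trop_singular_def by blast
  have fJ: "finite J" using r(1) fI bij_betw_finite by blast
  have sym': "\<forall>j\<in>J. \<forall>i\<in>I. M j i = M i j" using sym by simp
  show ?thesis unfolding sym_trop_singular_def
  proof (intro exI conjI allI impI)
    show b1: "bij_betw (inv_into I r1) J I" using r(1) by (rule bij_betw_inv_into)
    show "bij_betw (inv_into I r2) J I" using r(2) by (rule bij_betw_inv_into)
    fix \<tau> assume t: "bij_betw \<tau> J I"
    have "mono_value M J (inv_into I r1) = mono_value M I r1" by (rule inv_val[OF fI r(1) sym])
    also have "\<dots> \<le> mono_value M I (inv_into J \<tau>)" using r(3) bij_betw_inv_into[OF t] by blast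
    also have "\<dots> = mono_value M J \<tau>" by (rule inv_val[OF fJ t sym'])
    finally show "mono_value M J (inv_into I r1) \<le> mono_value M J \<tau>" .
  next
    show "mono_value M J (inv_into I r2) = mono_value M J (inv_into I r1)"
      using inv_val[OF fI r(1) sym] inv_val[OF fI r(2) sym] r(4) by simp
    show "sym_monomial J (inv_into I r1) \<noteq> sym_monomial J (inv_into I r2)"
      using inv_mono[OF fI r(1)] inv_mono[OF fI r(2)] r(5) by simp
  qed
qed


lemma relabel_val:
  assumes "finite I" "inj_on f (I \<union> J)" "\<forall>i\<in>I. \<forall>j\<in>J. B (f i) (f j) = A i j" "bij_betw \<rho> I J"
  shows "mono_value B (f ` I) (\<lambda>k. f (\<rho> (inv_into I f k))) = mono_value A I \<rho>"
proof -
  have injI: "inj_on f I" using assms(2) inj_on_subset by blast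
  have "mono_value B (f ` I) (\<lambda>k. f (\<rho> (inv_into I f k))) = (\<Sum>i\<in>I. B (f i) (f (\<rho> (inv_into I f (f i)))))"
    unfolding mono_value_def by (rule sum.reindex[OF injI, unfolded comp_def])
  also have "\<dots> = (\<Sum>i\<in>I. A i (\<rho> i))"
  proof (rule sum.cong[OF refl])
    fix i assume i: "i \<in> I"
    have "\<rho> i \<in> J" using i assms(4) by (rule bij_betw_apply[rotated])
    then show "B (f i) (f (\<rho> (inv_into I f (f i)))) = A i (\<rho> i)" using i injI assms(3) by simp
  qed
  finally show ?thesis unfolding mono_value_def .
qed

lemma relabel_mono:
  assumes "finite I" "inj_on f (I \<union> J)" "bij_betw \<rho> I J"
  shows "sym_monomial (f ` I) (\<lambda>k. f (\<rho> (inv_into I f k))) = image_mset (image f) (sym_monomial I \<rho>)"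
proof -
  have injI: "inj_on f I" using assms(2) inj_on_subset by blast
  have "sym_monomial (f ` I) (\<lambda>k. f (\<rho> (inv_into I f k))) = image_mset (\<lambda>i. {f i, f (\<rho> (inv_into I f (f i)))}) (mset_set I)"
    unfolding sym_monomial_def image_mset_mset_set[OF injI, symmetric] by (simp add: image_mset.compositionality comp_def)
  also have "\<dots> = image_mset (\<lambda>i. f ` {i, \<rho> i}) (mset_set I)"
    by (rule image_mset_cong) (use assms(1) injI in auto)
  finally show ?thesis unfolding sym_monomial_def by (simp add: image_mset.compositionality comp_def)
qed

lemma mono_subset:
  assumes "finite I" "bij_betw \<rho> I J" "s \<in># sym_monomial I \<rho>"
  shows "s \<subseteq> I \<union> J"
  using assms unfolding sym_monomial_def by (auto dest: bij_betw_apply)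

lemma sing_relabel:
  assumes fI: "finite I" and inj: "inj_on f (I \<union> J)" and BA: "\<forall>i\<in>I. \<forall>j\<in>J. B (f i) (f j) = A i j"
    and S: "sym_trop_singular A I J"
  shows "sym_trop_singular B (f ` I) (f ` J)"
proof -
  obtain r1 r2 where r: "bij_betw r1 I J" "bij_betw r2 I J"
    "\<forall>\<rho>. bij_betw \<rho> I J \<longrightarrow> mono_value A I r1 \<le> mono_value A I \<rho>"
    "mono_value A I r2 = mono_value A I r1" "sym_monomial I r1 \<noteq> sym_monomial I r2"
    using S unfolding sym_trop_singular_def by blast
  have injI: "inj_on f I" and injJ: "inj_on f J" using inj inj_on_subset by blast+
  define h where "h = (\<lambda>\<rho> k. f (\<rho> (inv_into I f k)))"
  have hbij: "\<And>\<rho>. bij_betw \<rho> I J \<Longrightarrow> bij_betw (h \<rho>) (f ` I) (f ` J)"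
  proof -
    fix \<rho> assume "bij_betw \<rho> I J"
    have "bij_betw (inv_into I f) (f ` I) I" by (rule bij_betw_inv_into[OF inj_on_imp_bij_betw[OF injI]])
    then have "bij_betw (\<rho> \<circ> inv_into I f) (f ` I) J" using \<open>bij_betw \<rho> I J\<close> by (rule bij_betw_trans)
    then have "bij_betw (f \<circ> (\<rho> \<circ> inv_into I f)) (f ` I) (f ` J)"
      using inj_on_imp_bij_betw[OF injJ] by (rule bij_betw_trans)
    then show "bij_betw (h \<rho>) (f ` I) (f ` J)" unfolding h_def comp_def .
  qed
  show ?thesis unfolding sym_trop_singular_def
  proof (intro exI conjI allI impI)
    show "bij_betw (h r1) (f ` I) (f ` J)" by (rule hbij[OF r(1)])
    show "bij_betw (h r2) (f ` I) (f ` J)" by (rule hbij[OF r(2)])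
    fix \<tau> assume t: "bij_betw \<tau> (f ` I) (f ` J)"
    define \<tau>' where "\<tau>' = (\<lambda>i. inv_into J f (\<tau> (f i)))"
    have t': "bij_betw \<tau>' I J"
    proof -
      have "bij_betw (\<tau> \<circ> f) I (f ` J)" using inj_on_imp_bij_betw[OF injI] t by (rule bij_betw_trans)
      then have "bij_betw (inv_into J f \<circ> (\<tau> \<circ> f)) I J"
        using bij_betw_inv_into[OF inj_on_imp_bij_betw[OF injJ]] by (rule bij_betw_trans)
      then show ?thesis unfolding \<tau>'_def comp_def .
    qed
    have "mono_value B (f ` I) (h \<tau>') = mono_value B (f ` I) \<tau>"
      unfolding mono_value_def
    proof (rule sum.cong[OF refl])
      fix k assume k: "k \<in> f ` I"
      then obtain i where i: "i \<in> I" "k = f i" by blast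
      have "\<tau> k \<in> f ` J" using k t by (rule bij_betw_apply[rotated])
      then have "f (inv_into J f (\<tau> k)) = \<tau> k" by (simp add: f_inv_into_f)
      then show "B k (h \<tau>' k) = B k (\<tau> k)" unfolding h_def \<tau>'_def using i injI by simp
    qed
    then have "mono_value B (f ` I) \<tau> = mono_value A I \<tau>'"
      using relabel_val[OF fI inj BA t'] unfolding h_def by simp
    moreover have "mono_value B (f ` I) (h r1) = mono_value A I r1"
      using relabel_val[OF fI inj BA r(1)] unfolding h_def by simp
    ultimately show "mono_value B (f ` I) (h r1) \<le> mono_value B (f ` I) \<tau>" using r(3) t' by simp
  next
    show "mono_value B (f ` I) (h r2) = mono_value B (f ` I) (h r1)"
      using relabel_val[OF fI inj BA r(1)] relabel_val[OF fI inj BA r(2)] r(4) unfolding h_def by simp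
    show "sym_monomial (f ` I) (h r1) \<noteq> sym_monomial (f ` I) (h r2)"
    proof
      assume eq: "sym_monomial (f ` I) (h r1) = sym_monomial (f ` I) (h r2)"
      have e2: "image_mset (image f) (sym_monomial I r1) = image_mset (image f) (sym_monomial I r2)"
        using eq relabel_mono[OF fI inj r(1)] relabel_mono[OF fI inj r(2)] unfolding h_def by simp
      define g where "g = inv_into (I \<union> J) f"
      have canc: "\<And>s \<rho>. bij_betw \<rho> I J \<Longrightarrow> s \<in># sym_monomial I \<rho> \<Longrightarrow> image g (image f s) = s"
        unfolding g_def using inj mono_subset[OF fI] by (meson inv_into_image_cancel)
      have "image_mset (image g) (image_mset (image f) (sym_monomial I r1)) = sym_monomial I r1"
        by (simp add: image_mset.compositionality comp_def canc[OF r(1)] cong: image_mset_cong)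
      moreover have "image_mset (image g) (image_mset (image f) (sym_monomial I r2)) = sym_monomial I r2"
        by (simp add: image_mset.compositionality comp_def canc[OF r(2)] cong: image_mset_cong)
      ultimately show False using e2 r(5) by simp
    qed
  qed
qed


lemma nonsing_down:
  assumes fI: "finite I" and fJ: "finite J" and cI: "card I = Suc k" and cJ: "card J = Suc k"
    and NS: "\<not> sym_trop_singular M I J"
  shows "\<exists>I' J'. I' \<subseteq> I \<and> J' \<subseteq> J \<and> card I' = k \<and> card J' = k \<and> \<not> sym_trop_singular M I' J'"
proof -
  obtain \<rho>0 where "bij_betw \<rho>0 I J" using finite_same_card_bij[OF fI fJ] cI cJ by auto
  then obtain \<sigma> where s: "bij_betw \<sigma> I J" "\<forall>\<rho>. bij_betw \<rho> I J \<longrightarrow> mono_value M I \<sigma> \<le> mono_value M I \<rho>"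
    using exists_opt[OF fI] by blast
  have "I \<noteq> {}" using cI by auto
  then obtain i where i: "i \<in> I" by blast
  define I' where "I' = I - {i}"
  define J' where "J' = J - {\<sigma> i}"
  have si: "\<sigma> i \<in> J" using i s(1) by (rule bij_betw_apply[rotated])
  have fI': "finite I'" using fI unfolding I'_def by simp
  have cards: "card I' = k" "card J' = k" using cI cJ i si fI fJ unfolding I'_def J'_def by simp_all
  have sI': "bij_betw \<sigma> I' J'" unfolding I'_def J'_def
    by (rule bij_betw_DiffI[OF s(1)]) (use i si in auto)
  have Ieq: "I = insert i I'" "i \<notin> I'" using i unfolding I'_def by auto
  have ext_bij: "\<And>\<tau>. bij_betw \<tau> I' J' \<Longrightarrow> bij_betw (\<tau>(i := \<sigma> i)) I J"
  proof -
    fix \<tau> assume t: "bij_betw \<tau> I' J'"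
    have "bij_betw (\<tau>(i := \<sigma> i)) I' J' = bij_betw \<tau> I' J'"
      by (rule bij_betw_cong) (use Ieq(2) in auto)
    then have "bij_betw (\<tau>(i := \<sigma> i)) I' J'" using t by simp
    moreover have "bij_betw (\<tau>(i := \<sigma> i)) {i} {\<sigma> i}" by simp
    ultimately have "bij_betw (\<tau>(i := \<sigma> i)) (I' \<union> {i}) (J' \<union> {\<sigma> i})"
      by (rule bij_betw_combine) (simp add: J'_def)
    moreover have "I' \<union> {i} = I" "J' \<union> {\<sigma> i} = J" using i si unfolding I'_def J'_def by auto
    ultimately show "bij_betw (\<tau>(i := \<sigma> i)) I J" by simp
  qed
  have ext_val: "\<And>\<tau>. mono_value M I (\<tau>(i := \<sigma> i)) = M i (\<sigma> i) + mono_value M I' \<tau>"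
  proof -
    fix \<tau>
    have "mono_value M I (\<tau>(i := \<sigma> i)) = M i (\<sigma> i) + (\<Sum>j\<in>I'. M j ((\<tau>(i := \<sigma> i)) j))"
      unfolding mono_value_def Ieq(1) using fI' Ieq(2) by simp
    also have "(\<Sum>j\<in>I'. M j ((\<tau>(i := \<sigma> i)) j)) = mono_value M I' \<tau>"
      unfolding mono_value_def by (rule sum.cong) (use Ieq(2) in auto)
    finally show "mono_value M I (\<tau>(i := \<sigma> i)) = M i (\<sigma> i) + mono_value M I' \<tau>" .
  qed
  have ext_mono: "\<And>\<tau>. sym_monomial I (\<tau>(i := \<sigma> i)) = add_mset {i, \<sigma> i} (sym_monomial I' \<tau>)"
  proof -
    fix \<tau>
    have "sym_monomial I (\<tau>(i := \<sigma> i)) = add_mset {i, \<sigma> i} (image_mset (\<lambda>j. {j, (\<tau>(i := \<sigma> i)) j}) (mset_set I'))"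
      unfolding sym_monomial_def Ieq(1) using fI' Ieq(2) by simp
    also have "image_mset (\<lambda>j. {j, (\<tau>(i := \<sigma> i)) j}) (mset_set I') = sym_monomial I' \<tau>"
      unfolding sym_monomial_def by (rule image_mset_cong) (use Ieq(2) fI' in auto)
    finally show "sym_monomial I (\<tau>(i := \<sigma> i)) = add_mset {i, \<sigma> i} (sym_monomial I' \<tau>)" .
  qed
  have "\<not> sym_trop_singular M I' J'"
  proof
    assume "sym_trop_singular M I' J'"
    then obtain t1 t2 where t: "bij_betw t1 I' J'" "bij_betw t2 I' J'"
      "\<forall>\<rho>. bij_betw \<rho> I' J' \<longrightarrow> mono_value M I' t1 \<le> mono_value M I' \<rho>"
      "mono_value M I' t2 = mono_value M I' t1" "sym_monomial I' t1 \<noteq> sym_monomial I' t2"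
      unfolding sym_trop_singular_def by blast
    have "sym_trop_singular M I J" unfolding sym_trop_singular_def
    proof (intro exI conjI allI impI)
      show "bij_betw (t1(i := \<sigma> i)) I J" by (rule ext_bij[OF t(1)])
      show "bij_betw (t2(i := \<sigma> i)) I J" by (rule ext_bij[OF t(2)])
      fix \<rho> assume r: "bij_betw \<rho> I J"
      have "mono_value M I' \<sigma> = mono_value M I' (\<sigma>(i := \<sigma> i))" by simp
      have "mono_value M I (t1(i := \<sigma> i)) = M i (\<sigma> i) + mono_value M I' t1" by (rule ext_val)
      also have "\<dots> \<le> M i (\<sigma> i) + mono_value M I' \<sigma>" using t(3) sI' by simp
      also have "\<dots> = mono_value M I (\<sigma>(i := \<sigma> i))" by (rule ext_val[symmetric])
      also have "\<dots> = mono_value M I \<sigma>" by simp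
      also have "\<dots> \<le> mono_value M I \<rho>" using s(2) r by blast
      finally show "mono_value M I (t1(i := \<sigma> i)) \<le> mono_value M I \<rho>" .
    next
      show "mono_value M I (t2(i := \<sigma> i)) = mono_value M I (t1(i := \<sigma> i))"
        using ext_val t(4) by simp
      show "sym_monomial I (t1(i := \<sigma> i)) \<noteq> sym_monomial I (t2(i := \<sigma> i))"
        using ext_mono t(5) by simp
    qed
    then show False using NS by simp
  qed
  then show ?thesis using cards unfolding I'_def J'_def by blast
qed


definition mk3 :: "nat \<Rightarrow> nat \<Rightarrow> nat \<Rightarrow> nat \<Rightarrow> nat \<Rightarrow> nat \<Rightarrow> nat" where
  "mk3 a b p q s = (\<lambda>t. if t = a then p else if t = b then q else s)"

lemma mk3_simps:
  assumes "a \<noteq> b" "a \<noteq> c" "b \<noteq> c"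
  shows "mk3 a b p q s a = p" "mk3 a b p q s b = q" "mk3 a b p q s c = s"
  using assms unfolding mk3_def by auto

lemma mk3_bij:
  assumes "a \<noteq> b" "a \<noteq> c" "b \<noteq> c" "p \<noteq> q" "p \<noteq> s" "q \<noteq> s" "{p,q,s} = J"
  shows "bij_betw (mk3 a b p q s) {a,b,c} J"
  unfolding mk3_def by (rule bij3_mk[OF assms])

lemma sing_intro:
  assumes "bij_betw \<sigma> I J" "\<And>\<rho>. bij_betw \<rho> I J \<Longrightarrow> mono_value M I \<sigma> \<le> mono_value M I \<rho>"
    "bij_betw \<rho> I J" "mono_value M I \<rho> \<le> mono_value M I \<sigma>" "sym_monomial I \<rho> \<noteq> sym_monomial I \<sigma>"
  shows "sym_trop_singular M I J"
proof -
  have "mono_value M I \<rho> = mono_value M I \<sigma>" using assms(2)[OF assms(3)] assms(4) by simp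
  then show ?thesis unfolding sym_trop_singular_def using assms by metis
qed

lemma card3_with:
  assumes "card I = 3" "z \<in> I"
  shows "\<exists>u v. I = {z,u,v} \<and> z \<noteq> u \<and> z \<noteq> v \<and> u \<noteq> v"
proof -
  obtain x y w where I: "I = {x,y,w}" "x \<noteq> y" "y \<noteq> w" "x \<noteq> w" using assms(1) card_3_iff by metis
  have "z = x \<or> z = y \<or> z = w" using assms(2) I(1) by simp
  then show ?thesis
  proof (elim disjE)
    assume "z = x" then show ?thesis using I by blast
  next
    assume "z = y" then show ?thesis using I by (intro exI[of _ x] exI[of _ w]) auto
  next
    assume "z = w" then show ?thesis using I by (intro exI[of _ x] exI[of _ y]) auto
  qed
qed

lemma mset3_neq:
  assumes "W \<in># {#A2,B2,C2#}" "W \<noteq> A1" "W \<noteq> B1" "W \<noteq> C1"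
  shows "{#A1,B1,C1#} \<noteq> {#A2,B2,C2#}"
proof
  assume e: "{#A1,B1,C1#} = {#A2,B2,C2#}"
  have "W \<in># {#A1,B1,C1#}" using assms(1) by (simp only: e)
  then show False using assms(2-4) by simp
qed
locale G =
  fixes M :: "nat \<Rightarrow> nat \<Rightarrow> real" and N :: nat
  assumes sym: "\<And>i j. i < N \<Longrightarrow> j < N \<Longrightarrow> M i j = M j i"
    and nonneg: "\<And>i j. i < N \<Longrightarrow> j < N \<Longrightarrow> 0 \<le> M i j"
    and row0: "\<And>j. M 0 j = 0" and col0: "\<And>i. M i 0 = 0"
    and zcol: "\<And>x. x < N \<Longrightarrow> x \<noteq> 0 \<Longrightarrow> \<exists>r<N. r \<noteq> 0 \<and> M r x = 0"
    and sing0: "\<And>I J. I \<subseteq> {1..<N} \<Longrightarrow> J \<subseteq> {1..<N} \<Longrightarrow> card I = 3 \<Longrightarrow> card J = 3 \<Longrightarrow> sym_trop_singular M I J"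
begin

lemma sing_abc:
  assumes "a \<noteq> b" "a \<noteq> c" "b \<noteq> c" "x \<noteq> y" "x \<noteq> z" "y \<noteq> z"
    "a < N" "b < N" "c < N" "x < N" "y < N" "z < N"
    "a \<noteq> 0" "b \<noteq> 0" "c \<noteq> 0" "x \<noteq> 0" "y \<noteq> 0" "z \<noteq> 0"
  shows "sym_trop_singular M {a,b,c} {x,y,z}"
  by (rule sing0) (use assms in auto)

lemma case_b:
  assumes I: "I = {0,i1,i2}" and J: "J = {a,b,c}"
    and lt: "i1 < N" "i2 < N" "a < N" "b < N" "c < N"
    and nz: "i1 \<noteq> 0" "i2 \<noteq> 0" "a \<noteq> 0" "b \<noteq> 0" "c \<noteq> 0"
    and d: "i1 \<noteq> i2" "a \<noteq> b" "a \<noteq> c" "b \<noteq> c"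
    and s: "bij_betw \<sigma> I J" "\<And>\<rho>. bij_betw \<rho> I J \<Longrightarrow> mono_value M I \<sigma> \<le> mono_value M I \<rho>"
    and sv: "\<sigma> 0 = c" "\<sigma> i1 = a" "\<sigma> i2 = b"
  shows "sym_trop_singular M I J"
proof (rule ccontr)
  assume NS: "\<not> sym_trop_singular M I J"
  have d0: "0 \<noteq> i1" "0 \<noteq> i2" using nz by auto
  have vs: "mono_value M I \<sigma> = M i1 a + M i2 b"
    unfolding I val3[OF d0 d(1)] sv by (simp add: row0)
  have ms: "sym_monomial I \<sigma> = {#{0,c},{i1,a},{i2,b}#}"
    unfolding I mono3[OF d0 d(1)] sv ..
  have key: "\<And>x y z W. {x,y,z} = J \<Longrightarrow> x \<noteq> y \<Longrightarrow> x \<noteq> z \<Longrightarrow> y \<noteq> z \<Longrightarrow>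
      W \<in># {#{0,c},{i1,a},{i2,b}#} \<Longrightarrow> W \<noteq> {0,x} \<Longrightarrow> W \<noteq> {i1,y} \<Longrightarrow> W \<noteq> {i2,z} \<Longrightarrow>
      M i1 a + M i2 b < M i1 y + M i2 z"
  proof (rule ccontr)
    fix x y z W assume xyz: "{x,y,z} = J" "x \<noteq> y" "x \<noteq> z" "y \<noteq> z"
      and W: "W \<in># {#{0,c},{i1,a},{i2,b}#}" "W \<noteq> {0,x}" "W \<noteq> {i1,y}" "W \<noteq> {i2,z}"
      and nlt: "\<not> M i1 a + M i2 b < M i1 y + M i2 z"
    have mne: "{#{0,x},{i1,y},{i2,z}#} \<noteq> {#{0,c},{i1,a},{i2,b}#}"
      by (rule mset3_neq[OF W])
    have rb: "bij_betw (mk3 0 i1 x y z) I J" unfolding I by (rule mk3_bij[OF d0 d(1) xyz(2-4) xyz(1)])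
    have vr: "mono_value M I (mk3 0 i1 x y z) = M i1 y + M i2 z"
      unfolding I val3[OF d0 d(1)] mk3_simps[OF d0 d(1)] by (simp add: row0)
    have mr: "sym_monomial I (mk3 0 i1 x y z) = {#{0,x},{i1,y},{i2,z}#}"
      unfolding I mono3[OF d0 d(1)] mk3_simps[OF d0 d(1)] ..
    have le: "mono_value M I (mk3 0 i1 x y z) \<le> mono_value M I \<sigma>"
      using vr vs nlt by linarith
    have "sym_monomial I (mk3 0 i1 x y z) = sym_monomial I \<sigma>"
      by (rule nonsing_elim[OF NS s(1) s(2) rb le])
    then show False using mr ms mne by simp
  qed
  obtain r where r: "r < N" "r \<noteq> 0" "M r c = 0" using zcol[OF lt(5) nz(5)] by blast
  show False
  proof (cases "r = i1 \<or> r = i2")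
    case True
    then show False
    proof
      assume "r = i1"
      have "M i1 a + M i2 b < M i1 c + M i2 b"
        by (rule key[of a c b "{0,c}"]) (use J d nz in \<open>simp_all add: doubleton_eq_iff insert_commute\<close>)
      then show False using r \<open>r = i1\<close> nonneg[of i1 a] lt by simp
    next
      assume "r = i2"
      have "M i1 a + M i2 b < M i1 a + M i2 c"
        by (rule key[of b a c "{0,c}"]) (use J d nz in \<open>simp_all add: doubleton_eq_iff insert_commute\<close>)
      then show False using r \<open>r = i2\<close> nonneg[of i2 b] lt by simp
    qed
  next
    case False
    have dr: "r \<noteq> i1" "r \<noteq> i2" using False by auto
    have S2: "sym_trop_singular M {r,i1,i2} {a,b,c}"
      by (rule sing_abc) (use r lt nz d dr in auto)
    have "\<not> sym_trop_singular M {r,i1,i2} {a,b,c}"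
    proof (rule nonsing_intro[of "mk3 r i1 c a b"])
      show "bij_betw (mk3 r i1 c a b) {r, i1, i2} {a, b, c}"
        by (rule mk3_bij) (use dr d in auto)
      fix \<rho> assume rb: "bij_betw \<rho> {r, i1, i2} {a, b, c}"
        and mne: "sym_monomial {r, i1, i2} \<rho> \<noteq> sym_monomial {r, i1, i2} (mk3 r i1 c a b)"
      have vs2: "mono_value M {r,i1,i2} (mk3 r i1 c a b) = M i1 a + M i2 b"
        unfolding val3[OF dr d(1)] mk3_simps[OF dr d(1)] using r by simp
      have vr: "mono_value M {r,i1,i2} \<rho> = M r (\<rho> r) + M i1 (\<rho> i1) + M i2 (\<rho> i2)"
        by (rule val3[OF dr d(1)])
      have mr: "sym_monomial {r,i1,i2} \<rho> = {#{r,\<rho> r},{i1,\<rho> i1},{i2,\<rho> i2}#}"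
        by (rule mono3[OF dr d(1)])
      have ms2: "sym_monomial {r,i1,i2} (mk3 r i1 c a b) = {#{r,c},{i1,a},{i2,b}#}"
        unfolding mono3[OF dr d(1)] mk3_simps[OF dr d(1)] ..
      have nn: "0 \<le> M r (\<rho> r)"
      proof -
        have "\<rho> r \<in> {a,b,c}" using rb by (rule bij_betw_apply) simp
        then show ?thesis using nonneg[of r "\<rho> r"] r lt by auto
      qed
      have JJ: "J = {a,b,c}" by (rule J)
      from bij3_cases[OF dr d(1) d(2-4) rb]
      have "M i1 a + M i2 b < M i1 (\<rho> i1) + M i2 (\<rho> i2)"
      proof (elim disjE conjE)
        assume e: "\<rho> r = a" "\<rho> i1 = b" "\<rho> i2 = c"
        show ?thesis unfolding e
          by (rule key[of a b c "{0,c}"]) (use J d nz in \<open>simp_all add: doubleton_eq_iff insert_commute\<close>)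
      next
        assume e: "\<rho> r = a" "\<rho> i1 = c" "\<rho> i2 = b"
        show ?thesis unfolding e
          by (rule key[of a c b "{0,c}"]) (use J d nz in \<open>simp_all add: doubleton_eq_iff insert_commute\<close>)
      next
        assume e: "\<rho> r = b" "\<rho> i1 = a" "\<rho> i2 = c"
        show ?thesis unfolding e
          by (rule key[of b a c "{0,c}"]) (use J d nz in \<open>simp_all add: doubleton_eq_iff insert_commute\<close>)
      next
        assume e: "\<rho> r = b" "\<rho> i1 = c" "\<rho> i2 = a"
        show ?thesis unfolding e
          by (rule key[of b c a "{0,c}"]) (use J d nz in \<open>simp_all add: doubleton_eq_iff insert_commute\<close>)
      next
        assume e: "\<rho> r = c" "\<rho> i1 = a" "\<rho> i2 = b"
        then have False using mne mr ms2 by simp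
        then show ?thesis ..
      next
        assume e: "\<rho> r = c" "\<rho> i1 = b" "\<rho> i2 = a"
        show ?thesis unfolding e
          by (rule key[of c b a "{i1,a}"]) (use J d nz in \<open>simp_all add: doubleton_eq_iff insert_commute\<close>)
      qed
      then show "mono_value M {r, i1, i2} (mk3 r i1 c a b) < mono_value M {r, i1, i2} \<rho>"
        using vs2 vr nn by simp
    qed
    then show False using S2 by simp
  qed
qed


lemma opt_meta:
  assumes "\<forall>\<rho>. bij_betw \<rho> I J \<longrightarrow> mono_value M I \<sigma> \<le> mono_value M I \<rho>"
  shows "\<And>\<rho>. bij_betw \<rho> I J \<Longrightarrow> mono_value M I \<sigma> \<le> mono_value M I \<rho>"
  using assms by blast

lemma all_b:
  assumes sub: "I \<subseteq> {..<N}" "J \<subseteq> {..<N}" and c: "card I = 3" "card J = 3"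
    and z: "0 \<in> I" "0 \<notin> J"
  shows "sym_trop_singular M I J"
proof -
  obtain i1 i2 where I: "I = {0,i1,i2}" "0 \<noteq> i1" "0 \<noteq> i2" "i1 \<noteq> i2"
    using card3_with[OF c(1) z(1)] by blast
  obtain a b cc where J: "J = {a,b,cc}" "a \<noteq> b" "b \<noteq> cc" "a \<noteq> cc"
    using c(2) card_3_iff by metis
  have lt: "i1 < N" "i2 < N" "a < N" "b < N" "cc < N" using sub I(1) J(1) by auto
  have nz: "i1 \<noteq> 0" "i2 \<noteq> 0" "a \<noteq> 0" "b \<noteq> 0" "cc \<noteq> 0" using I J z(2) by auto
  have fI: "finite I" using I by simp
  have fJ: "finite J" using J by simp
  obtain \<rho>0 where "bij_betw \<rho>0 I J" using finite_same_card_bij[OF fI fJ] c by metis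
  then obtain \<sigma> where s: "bij_betw \<sigma> I J" "\<forall>\<rho>. bij_betw \<rho> I J \<longrightarrow> mono_value M I \<sigma> \<le> mono_value M I \<rho>"
    using exists_opt[OF fI] by blast
  note opt = opt_meta[OF s(2)]
  have sb: "bij_betw \<sigma> {0,i1,i2} {a,b,cc}" using s(1) I J by simp
  from bij3_cases[OF I(2,3,4) J(2,4,3) sb] show ?thesis
  proof (elim disjE conjE)
    assume e: "\<sigma> 0 = a" "\<sigma> i1 = b" "\<sigma> i2 = cc"
    show ?thesis by (rule case_b[OF I(1) _ _ _ _ _ _ _ _ _ _ _ _ _ _ _ s(1) opt e]) (use I(4) J lt nz in auto)
  next
    assume e: "\<sigma> 0 = a" "\<sigma> i1 = cc" "\<sigma> i2 = b"
    show ?thesis by (rule case_b[OF I(1) _ _ _ _ _ _ _ _ _ _ _ _ _ _ _ s(1) opt e]) (use I(4) J lt nz in auto)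
  next
    assume e: "\<sigma> 0 = b" "\<sigma> i1 = a" "\<sigma> i2 = cc"
    show ?thesis by (rule case_b[OF I(1) _ _ _ _ _ _ _ _ _ _ _ _ _ _ _ s(1) opt e]) (use I(4) J lt nz in auto)
  next
    assume e: "\<sigma> 0 = b" "\<sigma> i1 = cc" "\<sigma> i2 = a"
    show ?thesis by (rule case_b[OF I(1) _ _ _ _ _ _ _ _ _ _ _ _ _ _ _ s(1) opt e]) (use I(4) J lt nz in auto)
  next
    assume e: "\<sigma> 0 = cc" "\<sigma> i1 = a" "\<sigma> i2 = b"
    show ?thesis by (rule case_b[OF I(1) _ _ _ _ _ _ _ _ _ _ _ _ _ _ _ s(1) opt e]) (use I(4) J lt nz in auto)
  next
    assume e: "\<sigma> 0 = cc" "\<sigma> i1 = b" "\<sigma> i2 = a"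
    show ?thesis by (rule case_b[OF I(1) _ _ _ _ _ _ _ _ _ _ _ _ _ _ _ s(1) opt e]) (use I(4) J lt nz in auto)
  qed
qed

lemma all_c:
  assumes sub: "I \<subseteq> {..<N}" "J \<subseteq> {..<N}" and c: "card I = 3" "card J = 3"
    and z: "0 \<notin> I" "0 \<in> J"
  shows "sym_trop_singular M I J"
proof -
  have "sym_trop_singular M J I" by (rule all_b[OF sub(2,1) c(2,1) z(2,1)])
  moreover have "finite J" using c(2) card.infinite by fastforce
  moreover have "\<forall>j\<in>J. \<forall>i\<in>I. M j i = M i j" using sub sym by blast
  ultimately show ?thesis using sing_transpose by blast
qed


lemma case_d:
  assumes I: "I = {0,x,x'}" and J: "J = {0,y,y'}"
    and lt: "x < N" "x' < N" "y < N" "y' < N"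
    and nz: "x \<noteq> 0" "x' \<noteq> 0" "y \<noteq> 0" "y' \<noteq> 0"
    and d: "x \<noteq> x'" "y \<noteq> y'"
    and s: "bij_betw \<sigma> I J" "\<And>\<rho>. bij_betw \<rho> I J \<Longrightarrow> mono_value M I \<sigma> \<le> mono_value M I \<rho>"
    and sv: "\<sigma> 0 = y" "\<sigma> x = 0" "\<sigma> x' = y'"
  shows "sym_trop_singular M I J"
proof (rule ccontr)
  assume NS: "\<not> sym_trop_singular M I J"
  have d0: "0 \<noteq> x" "0 \<noteq> x'" using nz by auto
  have vs: "mono_value M I \<sigma> = M x' y'"
    unfolding I val3[OF d0 d(1)] sv by (simp add: row0 col0)
  have ms: "sym_monomial I \<sigma> = {#{0,y},{x,0},{x',y'}#}"
    unfolding I mono3[OF d0 d(1)] sv ..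
  have key: "\<And>p q t. {p,q,t} = J \<Longrightarrow> p \<noteq> q \<Longrightarrow> p \<noteq> t \<Longrightarrow> q \<noteq> t \<Longrightarrow>
      {#{0,p},{x,q},{x',t}#} \<noteq> {#{0,y},{x,0},{x',y'}#} \<Longrightarrow> M x' y' < M x q + M x' t"
  proof (rule ccontr)
    fix p q t assume pqt: "{p,q,t} = J" "p \<noteq> q" "p \<noteq> t" "q \<noteq> t"
      and mne: "{#{0,p},{x,q},{x',t}#} \<noteq> {#{0,y},{x,0},{x',y'}#}"
      and nlt: "\<not> M x' y' < M x q + M x' t"
    have rb: "bij_betw (mk3 0 x p q t) I J" unfolding I by (rule mk3_bij[OF d0 d(1) pqt(2-4) pqt(1)])
    have vr: "mono_value M I (mk3 0 x p q t) = M x q + M x' t"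
      unfolding I val3[OF d0 d(1)] mk3_simps[OF d0 d(1)] by (simp add: row0)
    have mr: "sym_monomial I (mk3 0 x p q t) = {#{0,p},{x,q},{x',t}#}"
      unfolding I mono3[OF d0 d(1)] mk3_simps[OF d0 d(1)] ..
    have le: "mono_value M I (mk3 0 x p q t) \<le> mono_value M I \<sigma>"
      using vr vs nlt by linarith
    have "sym_monomial I (mk3 0 x p q t) = sym_monomial I \<sigma>"
      by (rule nonsing_elim[OF NS s(1) s(2) rb le])
    then show False using mr ms mne by simp
  qed
  have nn: "\<And>i j. i < N \<Longrightarrow> j < N \<Longrightarrow> 0 \<le> M i j" by (rule nonneg)
  have f1: "M x' y' < M x' y"
  proof -
    have "{#{0,y'},{x,0},{x',y}#} \<noteq> {#{0,y},{x,0},{x',y'}#}"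
      by (rule mset3_neq[of "{x',y'}"]) (use d nz in \<open>simp_all add: doubleton_eq_iff\<close>)
    then have "M x' y' < M x 0 + M x' y"
      by (intro key[of y' 0 y]) (use J d nz in auto)
    then show ?thesis by (simp add: col0)
  qed
  have f2: "M x' y' < M x y'"
  proof -
    have "{#{0,y},{x,y'},{x',0}#} \<noteq> {#{0,y},{x,0},{x',y'}#}"
      by (rule mset3_neq[of "{x',y'}"]) (use d nz in \<open>simp_all add: doubleton_eq_iff\<close>)
    then have "M x' y' < M x y' + M x' 0"
      by (intro key[of y y' 0]) (use J d nz in auto)
    then show ?thesis by (simp add: col0)
  qed
  have f4: "0 < M x y"
  proof -
    have "{#{0,y},{x,0},{x',y'}#} \<noteq> {#{0,0},{x,y},{x',y'}#}"
      by (rule mset3_neq[of "{0,0}"]) (use d nz in \<open>simp_all add: doubleton_eq_iff\<close>)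
    then have "M x' y' < M x y + M x' y'"
      by (intro key[of 0 y y']) (use J d nz in auto)
    then show ?thesis by simp
  qed
  have f3: "\<not> (x = y' \<and> x' = y) \<Longrightarrow> M x' y' < M x y"
  proof -
    assume ns: "\<not> (x = y' \<and> x' = y)"
    have "{#{0,y'},{x,y},{x',0}#} \<noteq> {#{0,y},{x,0},{x',y'}#}"
      by (rule mset3_neq[of "{x',y'}"]) (use d nz ns in \<open>auto simp add: doubleton_eq_iff\<close>)
    then have "M x' y' < M x y + M x' 0"
      by (intro key[of y' y 0]) (use J d nz in auto)
    then show ?thesis by (simp add: col0)
  qed
  obtain r where r: "r < N" "r \<noteq> 0" "M r y = 0" using zcol[OF lt(3) nz(3)] by blast
  have rx: "r \<noteq> x" using f4 r by auto
  have rx': "r \<noteq> x'" using f1 r nn[OF lt(2) lt(4)] by auto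
  have dr: "r \<noteq> x" "r \<noteq> x'" "x \<noteq> x'" using rx rx' d by auto
  have nnr: "\<And>j. j < N \<Longrightarrow> 0 \<le> M r j" using nn r(1) by blast
  show False
  proof (cases "x = y' \<and> x' = y")
    case False
    have f3': "M x' y' < M x y" using f3 False by blast
    have S2: "sym_trop_singular M {r,x,x'} {0,y,y'}"
      by (rule all_c) (use r lt nz d dr in auto)
    have dJ: "0 \<noteq> y" "0 \<noteq> y'" "y \<noteq> y'" using nz d by auto
    have "\<not> sym_trop_singular M {r,x,x'} {0,y,y'}"
    proof (rule nonsing_intro[of "mk3 r x y 0 y'"])
      show "bij_betw (mk3 r x y 0 y') {r, x, x'} {0, y, y'}"
        by (rule mk3_bij) (use dr nz d in auto)
      fix \<rho> assume rb: "bij_betw \<rho> {r, x, x'} {0, y, y'}"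
        and mne: "sym_monomial {r, x, x'} \<rho> \<noteq> sym_monomial {r, x, x'} (mk3 r x y 0 y')"
      have vs2: "mono_value M {r,x,x'} (mk3 r x y 0 y') = M x' y'"
        unfolding val3[OF dr] mk3_simps[OF dr] using r by (simp add: col0)
      have vr: "mono_value M {r,x,x'} \<rho> = M r (\<rho> r) + M x (\<rho> x) + M x' (\<rho> x')"
        by (rule val3[OF dr])
      have mr: "sym_monomial {r,x,x'} \<rho> = {#{r,\<rho> r},{x,\<rho> x},{x',\<rho> x'}#}"
        by (rule mono3[OF dr])
      have ms2: "sym_monomial {r,x,x'} (mk3 r x y 0 y') = {#{r,y},{x,0},{x',y'}#}"
        unfolding mono3[OF dr] mk3_simps[OF dr] ..
      from bij3_cases[OF dr dJ rb]
      have "M x' y' < M r (\<rho> r) + M x (\<rho> x) + M x' (\<rho> x')"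
      proof (elim disjE conjE)
        assume e: "\<rho> r = 0" "\<rho> x = y" "\<rho> x' = y'"
        show ?thesis unfolding e using f4 by (simp add: col0)
      next
        assume e: "\<rho> r = 0" "\<rho> x = y'" "\<rho> x' = y"
        show ?thesis unfolding e using f2 nn[OF lt(2) lt(3)] by (simp add: col0)
      next
        assume e: "\<rho> r = y" "\<rho> x = 0" "\<rho> x' = y'"
        then have False using mne mr ms2 by simp
        then show ?thesis ..
      next
        assume e: "\<rho> r = y" "\<rho> x = y'" "\<rho> x' = 0"
        show ?thesis unfolding e using f2 r by (simp add: col0)
      next
        assume e: "\<rho> r = y'" "\<rho> x = 0" "\<rho> x' = y"
        show ?thesis unfolding e using f1 nnr[OF lt(4)] by (simp add: col0)
      next
        assume e: "\<rho> r = y'" "\<rho> x = y" "\<rho> x' = 0"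
        show ?thesis unfolding e using f3' nnr[OF lt(4)] by (simp add: col0)
      qed
      then show "mono_value M {r, x, x'} (mk3 r x y 0 y') < mono_value M {r, x, x'} \<rho>"
        using vs2 vr by simp
    qed
    then show False using S2 by simp
  next
    case True
    then have xy: "y' = x" "y = x'" by auto
    define p where "p = x"
    define q where "q = x'"
    have pq: "p \<noteq> q" "p \<noteq> 0" "q \<noteq> 0" "p < N" "q < N" using d nz lt unfolding p_def q_def by auto
    have v: "M x' y' = M q p" unfolding p_def q_def xy ..
    have hqq: "M q p < M q q" using f1 unfolding xy p_def q_def .
    have hpp: "M q p < M p p" using f2 unfolding xy p_def q_def .
    have hpq: "M p q = M q p" using sym pq by auto
    have vpos: "0 < M q p" using f4 hpq unfolding xy p_def q_def by simp
    have rq: "M r q = 0" "M q r = 0" using r sym[OF r(1) pq(5)] unfolding q_def xy by auto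
    have drr: "r \<noteq> p" "r \<noteq> q" "p \<noteq> q" using dr unfolding p_def q_def by auto
    have nnpq: "0 \<le> M p p" "0 \<le> M q q" "0 \<le> M r r" "0 \<le> M r p" using nn pq r by auto
    show False
    proof (cases "M r p = 0")
      case False
      then have rp: "0 < M r p" using nnpq by simp
      have S2: "sym_trop_singular M {r,p,q} {0,q,p}"
        by (rule all_c) (use r pq drr in auto)
      have dJ: "0 \<noteq> q" "0 \<noteq> p" "q \<noteq> p" using pq by auto
      have "\<not> sym_trop_singular M {r,p,q} {0,q,p}"
      proof (rule nonsing_intro[of "mk3 r p q 0 p"])
        show "bij_betw (mk3 r p q 0 p) {r, p, q} {0, q, p}"
          by (rule mk3_bij) (use drr pq in auto)
        fix \<rho> assume rb: "bij_betw \<rho> {r, p, q} {0, q, p}"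
          and mne: "sym_monomial {r, p, q} \<rho> \<noteq> sym_monomial {r, p, q} (mk3 r p q 0 p)"
        have vs2: "mono_value M {r,p,q} (mk3 r p q 0 p) = M q p"
          unfolding val3[OF drr] mk3_simps[OF drr] using rq by (simp add: col0)
        have vr: "mono_value M {r,p,q} \<rho> = M r (\<rho> r) + M p (\<rho> p) + M q (\<rho> q)"
          by (rule val3[OF drr])
        have mr: "sym_monomial {r,p,q} \<rho> = {#{r,\<rho> r},{p,\<rho> p},{q,\<rho> q}#}"
          by (rule mono3[OF drr])
        have ms2: "sym_monomial {r,p,q} (mk3 r p q 0 p) = {#{r,q},{p,0},{q,p}#}"
          unfolding mono3[OF drr] mk3_simps[OF drr] ..
        from bij3_cases[OF drr dJ rb]
        have "M q p < M r (\<rho> r) + M p (\<rho> p) + M q (\<rho> q)"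
        proof (elim disjE conjE)
          assume e: "\<rho> r = 0" "\<rho> p = q" "\<rho> q = p"
          show ?thesis unfolding e using vpos hpq by (simp add: col0)
        next
          assume e: "\<rho> r = 0" "\<rho> p = p" "\<rho> q = q"
          show ?thesis unfolding e using hpp nnpq by (simp add: col0)
        next
          assume e: "\<rho> r = q" "\<rho> p = 0" "\<rho> q = p"
          then have False using mne mr ms2 by simp
          then show ?thesis ..
        next
          assume e: "\<rho> r = q" "\<rho> p = p" "\<rho> q = 0"
          show ?thesis unfolding e using hpp rq by (simp add: col0)
        next
          assume e: "\<rho> r = p" "\<rho> p = 0" "\<rho> q = q"
          show ?thesis unfolding e using hqq rp by (simp add: col0)
        next
          assume e: "\<rho> r = p" "\<rho> p = q" "\<rho> q = 0"
          show ?thesis unfolding e using rp hpq by (simp add: col0)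
        qed
        then show "mono_value M {r, p, q} (mk3 r p q 0 p) < mono_value M {r, p, q} \<rho>"
          using vs2 vr by simp
      qed
      then show False using S2 by simp
    next
      case True
      have rp: "M r p = 0" "M p r = 0" using True sym[OF r(1) pq(4)] by auto
      have S2: "sym_trop_singular M {r,p,q} {r,p,q}"
        by (rule sing_abc) (use r pq drr in auto)
      have "\<not> sym_trop_singular M {r,p,q} {r,p,q}"
      proof (rule nonsing_intro[of "mk3 r p p q r"])
        show "bij_betw (mk3 r p p q r) {r, p, q} {r, p, q}"
          by (rule mk3_bij) (use drr in auto)
        fix \<rho> assume rb: "bij_betw \<rho> {r, p, q} {r, p, q}"
          and mne: "sym_monomial {r, p, q} \<rho> \<noteq> sym_monomial {r, p, q} (mk3 r p p q r)"
        have vs2: "mono_value M {r,p,q} (mk3 r p p q r) = M q p"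
          unfolding val3[OF drr] mk3_simps[OF drr] using rq rp hpq by simp
        have vr: "mono_value M {r,p,q} \<rho> = M r (\<rho> r) + M p (\<rho> p) + M q (\<rho> q)"
          by (rule val3[OF drr])
        have mr: "sym_monomial {r,p,q} \<rho> = {#{r,\<rho> r},{p,\<rho> p},{q,\<rho> q}#}"
          by (rule mono3[OF drr])
        have ms2: "sym_monomial {r,p,q} (mk3 r p p q r) = {#{r,p},{p,q},{q,r}#}"
          unfolding mono3[OF drr] mk3_simps[OF drr] ..
        from bij3_cases[OF drr drr rb]
        have "M q p < M r (\<rho> r) + M p (\<rho> p) + M q (\<rho> q)"
        proof (elim disjE conjE)
          assume e: "\<rho> r = r" "\<rho> p = p" "\<rho> q = q"
          show ?thesis unfolding e using hpp nnpq by simp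
        next
          assume e: "\<rho> r = r" "\<rho> p = q" "\<rho> q = p"
          show ?thesis unfolding e using vpos hpq nnpq by simp
        next
          assume e: "\<rho> r = p" "\<rho> p = r" "\<rho> q = q"
          show ?thesis unfolding e using hqq rp by simp
        next
          assume e: "\<rho> r = p" "\<rho> p = q" "\<rho> q = r"
          then have False using mne mr ms2 by simp
          then show ?thesis ..
        next
          assume e: "\<rho> r = q" "\<rho> p = r" "\<rho> q = p"
          have "{#{r,q},{p,r},{q,p}#} = {#{r,p},{p,q},{q,r}#}"
            by (simp add: insert_commute add_mset_commute)
          then have False using mne mr ms2 e by simp
          then show ?thesis ..
        next
          assume e: "\<rho> r = q" "\<rho> p = p" "\<rho> q = r"
          show ?thesis unfolding e using hpp rq by simp
        qed
        then show "mono_value M {r, p, q} (mk3 r p p q r) < mono_value M {r, p, q} \<rho>"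
          using vs2 vr by simp
      qed
      then show False using S2 by simp
    qed
  qed
qed


lemma all_d:
  assumes sub: "I \<subseteq> {..<N}" "J \<subseteq> {..<N}" and c: "card I = 3" "card J = 3"
    and z: "0 \<in> I" "0 \<in> J"
  shows "sym_trop_singular M I J"
proof -
  obtain x1 x2 where I: "I = {0,x1,x2}" "0 \<noteq> x1" "0 \<noteq> x2" "x1 \<noteq> x2"
    using card3_with[OF c(1) z(1)] by blast
  obtain y1 y2 where J: "J = {0,y1,y2}" "0 \<noteq> y1" "0 \<noteq> y2" "y1 \<noteq> y2"
    using card3_with[OF c(2) z(2)] by blast
  have lt: "x1 < N" "x2 < N" "y1 < N" "y2 < N" using sub I(1) J(1) by auto
  have fI: "finite I" using I by simp
  have fJ: "finite J" using J by simp
  obtain \<rho>0 where "bij_betw \<rho>0 I J" using finite_same_card_bij[OF fI fJ] c by metis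
  then obtain \<sigma> where s: "bij_betw \<sigma> I J" "\<forall>\<rho>. bij_betw \<rho> I J \<longrightarrow> mono_value M I \<sigma> \<le> mono_value M I \<rho>"
    using exists_opt[OF fI] by blast
  note opt = opt_meta[OF s(2)]
  have sb: "bij_betw \<sigma> {0,x1,x2} {0,y1,y2}" using s(1) I J by simp
  have zz: "\<And>u w. {u,w} = {y1,y2} \<Longrightarrow> u \<noteq> w \<Longrightarrow> \<sigma> 0 = 0 \<Longrightarrow> \<sigma> x1 = u \<Longrightarrow> \<sigma> x2 = w \<Longrightarrow> sym_trop_singular M I J"
  proof -
    fix u w assume uw: "{u,w} = {y1,y2}" "u \<noteq> w" and e: "\<sigma> 0 = 0" "\<sigma> x1 = u" "\<sigma> x2 = w"
    have u0: "u \<noteq> 0" "w \<noteq> 0" "u < N" "w < N" using uw J lt by auto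
    have rb: "bij_betw (mk3 0 x1 u 0 w) I J" unfolding I(1)
      by (rule mk3_bij) (use I J uw u0 in auto)
    have vr: "mono_value M I (mk3 0 x1 u 0 w) = M x2 w"
      unfolding I(1) val3[OF I(2-4)] mk3_simps[OF I(2-4)] by (simp add: row0 col0)
    have vs: "mono_value M I \<sigma> = M 0 0 + M x1 u + M x2 w"
      unfolding I(1) val3[OF I(2-4)] e ..
    have "0 \<le> M x1 u" using nonneg lt u0 by auto
    then have le: "mono_value M I (mk3 0 x1 u 0 w) \<le> mono_value M I \<sigma>" using vr vs by (simp add: row0)
    have "sym_monomial I (mk3 0 x1 u 0 w) = {#{0,u},{x1,0},{x2,w}#}"
      unfolding I(1) mono3[OF I(2-4)] mk3_simps[OF I(2-4)] ..
    moreover have "sym_monomial I \<sigma> = {#{0,0},{x1,u},{x2,w}#}"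
      unfolding I(1) mono3[OF I(2-4)] e ..
    moreover have "{#{0,u},{x1,0},{x2,w}#} \<noteq> {#{0,0},{x1,u},{x2,w}#}"
      by (rule mset3_neq[of "{0,0}"]) (use I u0 in \<open>simp_all add: doubleton_eq_iff\<close>)
    ultimately have "sym_monomial I (mk3 0 x1 u 0 w) \<noteq> sym_monomial I \<sigma>" by simp
    note mne = this
    have opt2: "\<And>\<rho>. bij_betw \<rho> I J \<Longrightarrow> mono_value M I \<sigma> \<le> mono_value M I \<rho>" by (rule opt)
    show "sym_trop_singular M I J" by (rule sing_intro[of \<sigma> I J M "mk3 0 x1 u 0 w", OF s(1) opt2 rb le mne])
  qed
  from bij3_cases[OF I(2,3,4) J(2,3,4) sb] show ?thesis
  proof (elim disjE conjE)
    assume e: "\<sigma> 0 = 0" "\<sigma> x1 = y1" "\<sigma> x2 = y2"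
    show ?thesis by (rule zz[OF _ _ e]) (use J in auto)
  next
    assume e: "\<sigma> 0 = 0" "\<sigma> x1 = y2" "\<sigma> x2 = y1"
    show ?thesis by (rule zz[OF _ _ e]) (use J in auto)
  next
    assume e: "\<sigma> 0 = y1" "\<sigma> x1 = 0" "\<sigma> x2 = y2"
    show ?thesis by (rule case_d[OF I(1) J(1) _ _ _ _ _ _ _ _ _ _ s(1) opt e]) (use I J lt in auto)
  next
    assume e: "\<sigma> 0 = y1" "\<sigma> x1 = y2" "\<sigma> x2 = 0"
    have I': "I = {0,x2,x1}" using I by auto
    show ?thesis by (rule case_d[OF I' J(1) _ _ _ _ _ _ _ _ _ _ s(1) opt]) (use e I J lt in auto)
  next
    assume e: "\<sigma> 0 = y2" "\<sigma> x1 = 0" "\<sigma> x2 = y1"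
    have J': "J = {0,y2,y1}" using J by auto
    show ?thesis by (rule case_d[OF I(1) J' _ _ _ _ _ _ _ _ _ _ s(1) opt e]) (use I J lt in auto)
  next
    assume e: "\<sigma> 0 = y2" "\<sigma> x1 = y1" "\<sigma> x2 = 0"
    have I': "I = {0,x2,x1}" using I by auto
    have J': "J = {0,y2,y1}" using J by auto
    show ?thesis by (rule case_d[OF I' J' _ _ _ _ _ _ _ _ _ _ s(1) opt]) (use e I J lt in auto)
  qed
qed

lemma all3:
  assumes sub: "I \<subseteq> {..<N}" "J \<subseteq> {..<N}" and c: "card I = 3" "card J = 3"
  shows "sym_trop_singular M I J"
proof (cases "0 \<in> I")
  case True
  then show ?thesis
  proof (cases "0 \<in> J")
    case True
    then show ?thesis using all_d[OF sub c] \<open>0 \<in> I\<close> by blast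
  next
    case False
    then show ?thesis using all_b[OF sub c] \<open>0 \<in> I\<close> by blast
  qed
next
  case False
  then show ?thesis
  proof (cases "0 \<in> J")
    case True
    then show ?thesis using all_c[OF sub c] \<open>0 \<notin> I\<close> by blast
  next
    case False
    have "I \<subseteq> {1..<N}"
    proof
      fix t assume t: "t \<in> I"
      have "t \<noteq> 0" using t \<open>0 \<notin> I\<close> by metis
      moreover have "t < N" using t sub by auto
      ultimately show "t \<in> {1..<N}" by simp
    qed
    moreover have "J \<subseteq> {1..<N}"
    proof
      fix t assume t: "t \<in> J"
      have "t \<noteq> 0" using t False by metis
      moreover have "t < N" using t sub by auto
      ultimately show "t \<in> {1..<N}" by simp
    qed
    ultimately show ?thesis using sing0 c by blast
  qed
qed

end


definition PP :: "nat \<Rightarrow> (nat \<Rightarrow> nat \<Rightarrow> real) \<Rightarrow> nat \<Rightarrow> bool" where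
  "PP n A r \<longleftrightarrow> (\<exists>I J. I \<subseteq> {..<n} \<and> J \<subseteq> {..<n} \<and> card I = r \<and> card J = r \<and> \<not> sym_trop_singular A I J)"

lemma trank_PP: "sym_tropical_rank n A = Greatest (PP n A)"
  unfolding sym_tropical_rank_def PP_def ..

lemma PP_bound: "PP n A r \<Longrightarrow> r \<le> n"
proof -
  assume "PP n A r"
  then obtain I where I: "I \<subseteq> {..<n}" "card I = r" unfolding PP_def by blast
  have "card I \<le> card {..<n}" by (rule card_mono[OF finite_lessThan I(1)])
  then show "r \<le> n" using I(2) by simp
qed

lemma PP_0: "PP n A 0"
  unfolding PP_def
proof (intro exI conjI)
  show "\<not> sym_trop_singular A {} {}" unfolding sym_trop_singular_def sym_monomial_def by simp
qed auto

lemma PP_down: "PP n A (Suc k) \<Longrightarrow> PP n A k"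
proof -
  assume "PP n A (Suc k)"
  then obtain I J where IJ: "I \<subseteq> {..<n}" "J \<subseteq> {..<n}" "card I = Suc k" "card J = Suc k"
    "\<not> sym_trop_singular A I J" unfolding PP_def by blast
  have f: "finite I" "finite J" using IJ(1,2) finite_subset by blast+
  obtain I' J' where "I' \<subseteq> I" "J' \<subseteq> J" "card I' = k" "card J' = k" "\<not> sym_trop_singular A I' J'"
    using nonsing_down[OF f IJ(3,4,5)] by blast
  then show "PP n A k" unfolding PP_def using IJ(1,2) by blast
qed

lemma PP_down_iter: "PP n A (k + d) \<Longrightarrow> PP n A k"
proof (induction d)
  case 0
  then show ?case by simp
next
  case (Suc d)
  have "PP n A (Suc (k + d))" using Suc.prems by simp
  then have "PP n A (k + d)" by (rule PP_down)
  then show ?case by (rule Suc.IH)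
qed

lemma tropical_part:
  assumes symA: "symmetric_mat n A" and nA: "normalized n A" and T: "sym_tropical_rank n A = 2"
  shows "sym_tropical_rank (n + 1) (aug A) = 2"
proof -
  have GA: "Greatest (PP n A) = 2" using T trank_PP by simp
  have bnd: "\<And>y. PP n A y \<Longrightarrow> y \<le> n" by (rule PP_bound)
  have PA2: "PP n A 2" using GreatestI_nat[of "PP n A" 0 n, OF PP_0 bnd] GA by simp
  have PAle: "\<And>y. PP n A y \<Longrightarrow> y \<le> 2"
  proof -
    fix y assume "PP n A y"
    then show "y \<le> 2" using Greatest_le_nat[of "PP n A" y n, OF _ bnd] GA by simp
  qed
  have sing3: "\<And>I J. I \<subseteq> {..<n} \<Longrightarrow> J \<subseteq> {..<n} \<Longrightarrow> card I = 3 \<Longrightarrow> card J = 3 \<Longrightarrow> sym_trop_singular A I J"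
  proof (rule ccontr)
    fix I J assume h: "I \<subseteq> {..<n}" "J \<subseteq> {..<n}" "card I = 3" "card J = 3" "\<not> sym_trop_singular A I J"
    then have "PP n A 3" unfolding PP_def by blast
    then show False using PAle by fastforce
  qed
  have symaug: "\<And>i j. i < n + 1 \<Longrightarrow> j < n + 1 \<Longrightarrow> aug A i j = aug A j i"
    using symA unfolding symmetric_mat_def aug_def by auto
  have relabel_back: "\<And>I0 J0. I0 \<subseteq> {..<n} \<Longrightarrow> J0 \<subseteq> {..<n} \<Longrightarrow> sym_trop_singular (aug A) (Suc ` I0) (Suc ` J0) \<Longrightarrow> sym_trop_singular A I0 J0"
  proof -
    fix I0 J0 assume h: "I0 \<subseteq> {..<n}" "J0 \<subseteq> {..<n}" "sym_trop_singular (aug A) (Suc ` I0) (Suc ` J0)"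
    have fI: "finite (Suc ` I0)" using h(1) finite_subset by blast
    have inj: "inj_on (\<lambda>k. k - 1) (Suc ` I0 \<union> Suc ` J0)" by (auto simp: inj_on_def)
    have BA: "\<forall>i\<in>Suc ` I0. \<forall>j\<in>Suc ` J0. A (i - 1) (j - 1) = aug A i j" by (auto simp: aug_def)
    have "sym_trop_singular A ((\<lambda>k. k - 1) ` Suc ` I0) ((\<lambda>k. k - 1) ` Suc ` J0)"
      by (rule sing_relabel[OF fI inj BA h(3)])
    then show "sym_trop_singular A I0 J0" by (simp add: image_image)
  qed
  have PM2: "PP (n + 1) (aug A) 2"
  proof -
    obtain I0 J0 where IJ: "I0 \<subseteq> {..<n}" "J0 \<subseteq> {..<n}" "card I0 = 2" "card J0 = 2"
      "\<not> sym_trop_singular A I0 J0" using PA2 unfolding PP_def by blast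
    have "Suc ` I0 \<subseteq> {..<n+1}" "Suc ` J0 \<subseteq> {..<n+1}" using IJ(1,2) by auto
    moreover have "card (Suc ` I0) = 2" "card (Suc ` J0) = 2" using IJ(3,4) by (simp_all add: card_image)
    moreover have "\<not> sym_trop_singular (aug A) (Suc ` I0) (Suc ` J0)" using relabel_back IJ by blast
    ultimately show ?thesis unfolding PP_def by blast
  qed
  interpret G "aug A" "n + 1"
  proof
    show "\<And>i j. i < n + 1 \<Longrightarrow> j < n + 1 \<Longrightarrow> aug A i j = aug A j i" by (rule symaug)
    show "\<And>i j. i < n + 1 \<Longrightarrow> j < n + 1 \<Longrightarrow> 0 \<le> aug A i j"
      using nA unfolding normalized_def aug_def by auto
    show "\<And>j. aug A 0 j = 0" by (simp add: aug_def)
    show "\<And>i. aug A i 0 = 0" by (simp add: aug_def)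
  next
    fix x assume x: "x < n + 1" "x \<noteq> 0"
    then have "x - 1 < n" by simp
    then obtain i where i: "i < n" "A i (x - 1) = 0" using nA unfolding normalized_def by blast
    show "\<exists>r<n + 1. r \<noteq> 0 \<and> aug A r x = 0"
      by (rule exI[of _ "Suc i"]) (use i x in \<open>simp add: aug_def\<close>)
  next
    fix I J assume h: "I \<subseteq> {1..<n + 1}" "J \<subseteq> {1..<n + 1}" "card I = 3" "card J = 3"
    define I0 where "I0 = (\<lambda>k. k - 1) ` I"
    define J0 where "J0 = (\<lambda>k. k - 1) ` J"
    have injI: "inj_on (\<lambda>k. k - 1) I"
    proof (rule inj_onI)
      fix x y assume xy: "x \<in> I" "y \<in> I" "x - 1 = y - 1"
      have "1 \<le> x" "1 \<le> y" using xy(1,2) h(1) by auto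
      then show "x = y" using xy(3) by simp
    qed
    have injJ: "inj_on (\<lambda>k. k - 1) J"
    proof (rule inj_onI)
      fix x y assume xy: "x \<in> J" "y \<in> J" "x - 1 = y - 1"
      have "1 \<le> x" "1 \<le> y" using xy(1,2) h(2) by auto
      then show "x = y" using xy(3) by simp
    qed
    have sub: "I0 \<subseteq> {..<n}" "J0 \<subseteq> {..<n}" using h(1,2) unfolding I0_def J0_def
      by (auto simp: subset_iff)
    have c: "card I0 = 3" "card J0 = 3" unfolding I0_def J0_def using card_image[OF injI] card_image[OF injJ] h by auto
    have S: "sym_trop_singular A I0 J0" by (rule sing3[OF sub c])
    have fI0: "finite I0" using sub(1) finite_subset by blast
    have "sym_trop_singular (aug A) (Suc ` I0) (Suc ` J0)"
      by (rule sing_relabel[OF fI0 _ _ S]) (auto simp: aug_def)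
    moreover have "Suc ` I0 = I" unfolding I0_def image_image using h(1)
      by (force simp: image_iff)
    moreover have "Suc ` J0 = J" unfolding J0_def image_image using h(2)
      by (force simp: image_iff)
    ultimately show "sym_trop_singular (aug A) I J" by simp
  qed
  have PMle: "\<And>y. PP (n + 1) (aug A) y \<Longrightarrow> y \<le> 2"
  proof (rule ccontr)
    fix y assume Py: "PP (n + 1) (aug A) y" and "\<not> y \<le> 2"
    then have "y = 3 + (y - 3)" by simp
    then have "PP (n + 1) (aug A) 3" using Py PP_down_iter by metis
    then obtain I J where "I \<subseteq> {..<n+1}" "J \<subseteq> {..<n+1}" "card I = 3" "card J = 3"
      "\<not> sym_trop_singular (aug A) I J" unfolding PP_def by blast
    then show False using all3 by blast
  qed
  show ?thesis unfolding trank_PP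
    by (rule Greatest_equality[of "PP (n + 1) (aug A)" 2, OF PM2 PMle])
qed


theorem lemma5:
  fixes n :: nat and A :: "nat \<Rightarrow> nat \<Rightarrow> real"
  assumes "symmetric_mat n A" and "normalized n A"
  shows "(sym_tropical_rank n A = 2 \<longrightarrow> sym_tropical_rank (n + 1) (aug A) = 2) \<and>
         (sym_kapranov_rank n A = 2 \<longrightarrow> sym_kapranov_rank (n + 1) (aug A) = 2)"
proof (intro conjI impI)
  assume "sym_tropical_rank n A = 2"
  then show "sym_tropical_rank (n + 1) (aug A) = 2" by (rule tropical_part[OF assms])
next
  assume "sym_kapranov_rank n A = 2"
  then show "sym_kapranov_rank (n + 1) (aug A) = 2" by (rule kapranov_part[OF assms])
qed

end
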